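(* Suppose Assumptions 1 and 2 hold, $J_0\ne\emptyset$, and Condition (L) holds for all $j=1,\dots,q$. Let $$\mathcal A=\Big\{\Big\|f-\sum_{j\in J_0}\Pi_{V_j}f_j\Big\|_n^2\le 2c'(1-\rho_{q^*}^2)\kappa\Big\}.$$ Then $\mathbb P(\mathcal A^c)\le\exp\big(-\tfrac{3}{16}\tfrac{n}{d_{q^*}}\big)$.
   Context: Let $q\ge1$ and let $(Y,X)$ be a pair of random variables with $X=(X_1,\dots,X_q)^T$, each $X_j$ real-valued, and $Y=\sum_{j=1}^q f_j(X_j)+\epsilon$, where $f_j\in L^2(\mathbb P^{X_j})$, $\mathbb E[f_j(X_j)]=0$ for $j=1,\dots,q-1$, and $\epsilon$ is a centered Gaussian variable with variance $\sigma^2$, independent of $X$. Write $f(x)=\sum_{j=1}^qf_j(x_j)$. The space $L^2(\mathbb P^X)$ carries the inner product $\langle g,h\rangle=\mathbb E[g(X)h(X)]$ and norm $\|g\|=\langle g,g\rangle^{1/2}$. Let $H_q=L^2(\mathbb P^{X_q})$ and $H_j=\{h\in L^2(\mathbb P^{X_j}):\mathbb E[h(X_j)]=0\}$ for $j<q$, viewed as subspaces of $L^2(\mathbb P^X)$ via $x\mapsto h(x_j)$; for $J\subseteq\{1,\dots,q\}$ let $H_J=\sum_{j\in J}H_j$ (with $H_\emptyset=\{0\}$). Let $J_0=\{j:\|f_j\|>0\}$, $s=|J_0|$, and let $q^*$ be an integer with $s\le q^*$. Let $\rho_{q^*}$ be the supremum of $\langle h_1,h_2\rangle/(\|h_1\|\|h_2\|)$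 over all nonzero $h_1\in H_{J_1}$, $h_2\in H_{J_2}$ and all $J_1,J_2\subseteq\{1,\dots,q\}$ with $J_1\cap J_2=\emptyset$ and $|J_1|,|J_2|\le q^*$. Assumption 1 is the condition $\rho_{q^*}<1$. $\kappa=\min_{\emptyset\neq J\subseteq J_0}\|\sum_{j\in J}f_j\|^2$. $\epsilon'_{q^*}$ is a positive number such that $\|\sum_{j\in J}g_j\|^2\le(1+\epsilon'_{q^*})\sum_{j\in J}\|g_j\|^2$ for all $J$ with $|J|\le q^*$ and all $g_j\in H_j$. Assumption 2: each $X_j$ takes values in $[0,1]$ and has a density $p_j$ with respect to Lebesgue measure with $c\le p_j\le 1/c$ for a constant $c>0$, and $f_j\in\tilde W_j(\alpha_j,K_j)=\{\sum_{k\ge1}\theta_k\phi_k:\sum_{k\ge1}(2\pi k)^{2\alpha_j}(\theta_{2k}^2+\theta_{2k+1}^2)\le K_j^2\}$ with $\alpha_j>1/2$, $K_j>0$, where $\phi_1=1$, $\phi_{2k}(x)=\sqrt2\cos(2\pi kx)$, $\phi_{2k+1}(x)=\sqrt2\sin(2\pi kx)$, $k\ge1$, on $[0,1]$. Given integers $m_j\ge1$, $V_j$ is the intersection of $H_j$ with the linear span of $\phi_1(x_j),\dots,\phi_{m_j}(x_j)$; $V_J=\sum_{j\in J}V_j$, $d_J=\dim V_J$, $d_l=\max_{|J|=l}d_J$; $\Pi_{V_j}$ is the orthogonal projection of $L^2(\mathbb P^X)$ onto $V_j$. $C_j>0$ denotes a constant depending only on $\alpha_j$ and $c$ such that $\|h-\Pi_{V_j}h\|^2\le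 C_jK_j^2m_j^{-2\alpha_j}$ and $\|h-\Pi_{V_j}h\|_\infty^2\le C_jK_j^2m_j^{1-2\alpha_j}$ for all $h\in\tilde W_j(\alpha_j,K_j)\cap H_j$ and all $m_j\ge1$. Condition (L): $m_j\ge\big(C_jK_j^2q^*(1+\epsilon'_{q^*})/(c'(1-\rho_{q^*}^2)\kappa)\big)^{1/(2\alpha_j)}$, where $c'\in(0,1)$ is a constant. The data $(Y^i,X^i)$, $i=1,\dots,n$, are independent copies of $(Y,X)$. The empirical norm is $\|h\|_n^2=\frac1n\sum_{i=1}^nh(X^i)^2$. *)

theory Defs
  imports "HOL-Probability.Probability"
begin

type_synonym pt = "nat \<Rightarrow> real"

text \<open>Trigonometric basis on [0,1]: phi_1 = 1, phi_(2k) = sqrt 2 cos(2 pi k x),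
  phi_(2k+1) = sqrt 2 sin(2 pi k x), k >= 1.  (Only indices k >= 1 are used.)\<close>
definition trig :: "nat \<Rightarrow> real \<Rightarrow> real" where
  "trig k t = (if k = 1 then 1
     else if even k then sqrt 2 * cos (2 * pi * real (k div 2) * t)
     else sqrt 2 * sin (2 * pi * real (k div 2) * t))"

text \<open>Periodic Sobolev ellipsoid tilde W(alpha, K): functions equal (Lebesgue-a.e. on [0,1])
  to sum_(k>=1) theta_k phi_k with sum_(k>=1) (2 pi k)^(2 alpha) (theta_(2k)^2 + theta_(2k+1)^2) <= K^2.\<close>
definition sobolev_ball :: "real \<Rightarrow> real \<Rightarrow> (real \<Rightarrow> real) set" where
  "sobolev_ball \<alpha> K = {h. \<exists>\<theta>::nat \<Rightarrow> real.
      summable (\<lambda>k. (2 * pi * real (Suc k)) powr (2 * \<alpha>) *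
                     ((\<theta> (2 * Suc k))\<^sup>2 + (\<theta> (2 * Suc k + 1))\<^sup>2)) \<and>
      (\<Sum>k. (2 * pi * real (Suc k)) powr (2 * \<alpha>) *
                     ((\<theta> (2 * Suc k))\<^sup>2 + (\<theta> (2 * Suc k + 1))\<^sup>2)) \<le> K\<^sup>2 \<and>
      (AE t in lborel. t \<in> {0..1} \<longrightarrow> (\<lambda>k. \<theta> (Suc k) * trig (Suc k) t) sums h t)}"

definition l2inner :: "pt measure \<Rightarrow> (pt \<Rightarrow> real) \<Rightarrow> (pt \<Rightarrow> real) \<Rightarrow> real" where
  "l2inner PX g h = (\<integral>x. g x * h x \<partial>PX)"

definition l2norm :: "pt measure \<Rightarrow> (pt \<Rightarrow> real) \<Rightarrow> real" where
  "l2norm PX g = sqrt (\<integral>x. (g x)\<^sup>2 \<partial>PX)"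

definition Hj :: "pt measure \<Rightarrow> nat \<Rightarrow> nat \<Rightarrow> (pt \<Rightarrow> real) set" where
  "Hj PX q j = {g. \<exists>h::real \<Rightarrow> real. h \<in> borel_measurable borel \<and>
       integrable PX (\<lambda>x. (h (x j))\<^sup>2) \<and>
       (j < q \<longrightarrow> (\<integral>x. h (x j) \<partial>PX) = 0) \<and> g = (\<lambda>x. h (x j))}"

definition HJ :: "pt measure \<Rightarrow> nat \<Rightarrow> nat set \<Rightarrow> (pt \<Rightarrow> real) set" where
  "HJ PX q J = {g. \<exists>gs. (\<forall>j\<in>J. gs j \<in> Hj PX q j) \<and> g = (\<lambda>x. \<Sum>j\<in>J. gs j x)}"

text \<open>The value 0 is inserted so that the supremum of an empty family (q = 1) is 0; whenever the
  family is nonempty its supremum is >= 0 anyway (replace h1 by -h1).\<close>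
definition rho :: "pt measure \<Rightarrow> nat \<Rightarrow> nat \<Rightarrow> real" where
  "rho PX q qs = Sup (insert 0
     {l2inner PX h1 h2 / (l2norm PX h1 * l2norm PX h2) | h1 h2 J1 J2.
        J1 \<subseteq> {1..q} \<and> J2 \<subseteq> {1..q} \<and> J1 \<inter> J2 = {} \<and> card J1 \<le> qs \<and> card J2 \<le> qs \<and>
        h1 \<in> HJ PX q J1 \<and> h2 \<in> HJ PX q J2 \<and> l2norm PX h1 > 0 \<and> l2norm PX h2 > 0})"

definition Vj :: "pt measure \<Rightarrow> nat \<Rightarrow> nat \<Rightarrow> nat \<Rightarrow> (pt \<Rightarrow> real) set" where
  "Vj PX q j m = {g. \<exists>a::nat \<Rightarrow> real. g = (\<lambda>x. \<Sum>k=1..m. a k * trig k (x j))} \<inter> Hj PX q j"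

definition VJ :: "pt measure \<Rightarrow> nat \<Rightarrow> (nat \<Rightarrow> nat) \<Rightarrow> nat set \<Rightarrow> (pt \<Rightarrow> real) set" where
  "VJ PX q m J = {g. \<exists>gs. (\<forall>j\<in>J. gs j \<in> Vj PX q j (m j)) \<and> g = (\<lambda>x. \<Sum>j\<in>J. gs j x)}"

text \<open>Dimension of a set of functions viewed in L2(P^X) (functions equal a.e. identified):
  maximal size of a finite family that is linearly independent modulo null functions.\<close>
definition dimL2 :: "pt measure \<Rightarrow> (pt \<Rightarrow> real) set \<Rightarrow> nat" where
  "dimL2 PX S = Sup {card B | B. finite B \<and> B \<subseteq> S \<and>
      (\<forall>a. l2norm PX (\<lambda>x. \<Sum>b\<in>B. a b * b x) = 0 \<longrightarrow> (\<forall>b\<in>B. a b = 0))}"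

definition dmax :: "pt measure \<Rightarrow> nat \<Rightarrow> (nat \<Rightarrow> nat) \<Rightarrow> nat \<Rightarrow> nat" where
  "dmax PX q m l = Max {dimL2 PX (VJ PX q m J) | J. J \<subseteq> {1..q} \<and> card J = l}"

definition projV :: "pt measure \<Rightarrow> nat \<Rightarrow> nat \<Rightarrow> nat \<Rightarrow> (pt \<Rightarrow> real) \<Rightarrow> (pt \<Rightarrow> real)" where
  "projV PX q j m h = (SOME v. v \<in> Vj PX q j m \<and>
      (\<forall>w\<in>Vj PX q j m. l2inner PX (\<lambda>x. h x - v x) w = 0))"

definition J0 :: "pt measure \<Rightarrow> nat \<Rightarrow> (nat \<Rightarrow> real \<Rightarrow> real) \<Rightarrow> nat set" where
  "J0 PX q f = {j \<in> {1..q}. l2norm PX (\<lambda>x. f j (x j)) > 0}"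

definition kappa :: "pt measure \<Rightarrow> nat \<Rightarrow> (nat \<Rightarrow> real \<Rightarrow> real) \<Rightarrow> real" where
  "kappa PX q f = Min {(l2norm PX (\<lambda>x. \<Sum>j\<in>J. f j (x j)))\<^sup>2 | J. J \<subseteq> J0 PX q f \<and> J \<noteq> {}}"

end

theory Submission
  imports Defs "HOL-Library.Function_Algebras" "HOL-Analysis.Harmonic_Numbers"
begin


definition L2 :: "pt measure \<Rightarrow> (pt \<Rightarrow> real) \<Rightarrow> bool" where
  "L2 M g \<longleftrightarrow> g \<in> borel_measurable M \<and> integrable M (\<lambda>x. (g x)\<^sup>2)"

lemma abs_mult_le_sq: "\<bar>a * b\<bar> \<le> a\<^sup>2 + (b::real)\<^sup>2"
proof -
  have "0 \<le> (\<bar>a\<bar> - \<bar>b\<bar>)\<^sup>2" by simp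
  hence "2 * \<bar>a\<bar> * \<bar>b\<bar> \<le> a\<^sup>2 + b\<^sup>2" by (simp add: power2_eq_square algebra_simps)
  moreover have "0 \<le> \<bar>a\<bar> * \<bar>b\<bar>" by simp
  ultimately show ?thesis unfolding abs_mult by linarith
qed

lemma L2_prod_int:
  assumes "L2 M g" "L2 M h"
  shows "integrable M (\<lambda>x. g x * h x)"
proof (rule Bochner_Integration.integrable_bound[where f="\<lambda>x. (g x)\<^sup>2 + (h x)\<^sup>2"])
  show "integrable M (\<lambda>x. (g x)\<^sup>2 + (h x)\<^sup>2)" using assms unfolding L2_def by auto
  show "(\<lambda>x. g x * h x) \<in> borel_measurable M" using assms unfolding L2_def by auto
  show "AE x in M. norm (g x * h x) \<le> norm ((g x)\<^sup>2 + (h x)\<^sup>2)"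
    using abs_mult_le_sq by auto
qed

lemma L2_lin:
  assumes "L2 M g" "L2 M h"
  shows "L2 M (\<lambda>x. a * g x + b * h x)"
proof -
  have e: "(\<lambda>x. (a * g x + b * h x)\<^sup>2) = (\<lambda>x. a\<^sup>2 * (g x)\<^sup>2 + (2*a*b) * (g x * h x) + b\<^sup>2 * (h x)\<^sup>2)"
    by (auto simp: power2_eq_square algebra_simps)
  show ?thesis using assms L2_prod_int[OF assms] unfolding L2_def e by auto
qed

lemma L2_scale: "L2 M g \<Longrightarrow> L2 M (\<lambda>x. a * g x)"
  using L2_lin[of M g g a 0] by simp

lemma L2_add: "L2 M g \<Longrightarrow> L2 M h \<Longrightarrow> L2 M (\<lambda>x. g x + h x)"
  using L2_lin[of M g h 1 1] by simp

lemma L2_diff: "L2 M g \<Longrightarrow> L2 M h \<Longrightarrow> L2 M (\<lambda>x. g x - h x)"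
  using L2_lin[of M g h 1 "-1"] by simp

lemma L2_zero: "L2 M (\<lambda>x. 0)"
  unfolding L2_def by simp

lemma L2_sum_gen:
  assumes "finite K" "\<And>k. k \<in> K \<Longrightarrow> L2 M (w k)"
  shows "L2 M (\<lambda>x. \<Sum>k\<in>K. w k x)"
  using assms
proof (induction K rule: finite_induct)
  case empty then show ?case by (simp add: L2_zero)
next
  case (insert k K)
  then show ?case by (simp add: L2_add)
qed

lemma L2_sum:
  assumes "finite K" "\<And>k. k \<in> K \<Longrightarrow> L2 M (w k)"
  shows "L2 M (\<lambda>x. \<Sum>k\<in>K. b k * w k x)"
  using L2_sum_gen[of K M "\<lambda>k x. b k * w k x"] assms L2_scale by blast

lemma L2_const: "finite_measure M \<Longrightarrow> L2 M (\<lambda>x. c)"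
  unfolding L2_def by (simp add: finite_measure.integrable_const)

lemma l2inner_lin:
  assumes "L2 M g" "L2 M h" "L2 M u"
  shows "l2inner M (\<lambda>x. a * g x + b * h x) u = a * l2inner M g u + b * l2inner M h u"
proof -
  have "(\<lambda>x. (a * g x + b * h x) * u x) = (\<lambda>x. a * (g x * u x) + b * (h x * u x))"
    by (auto simp: algebra_simps)
  then show ?thesis unfolding l2inner_def using L2_prod_int[OF assms(1,3)] L2_prod_int[OF assms(2,3)]
    by simp
qed

lemma l2inner_sym: "l2inner M g h = l2inner M h g"
  unfolding l2inner_def by (simp add: mult.commute)

lemma l2inner_diff:
  assumes "L2 M g" "L2 M h" "L2 M u"
  shows "l2inner M (\<lambda>x. g x - h x) u = l2inner M g u - l2inner M h u"
  using l2inner_lin[OF assms, of 1 "-1"] by simp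

lemma l2inner_scale:
  assumes "L2 M g" "L2 M u"
  shows "l2inner M (\<lambda>x. a * g x) u = a * l2inner M g u"
  using l2inner_lin[OF assms(1) assms(1) assms(2), of a 0] by simp

lemma l2inner_sum:
  assumes "finite K" "\<And>k. k \<in> K \<Longrightarrow> L2 M (w k)" "L2 M u"
  shows "l2inner M (\<lambda>x. \<Sum>k\<in>K. b k * w k x) u = (\<Sum>k\<in>K. b k * l2inner M (w k) u)"
proof -
  have "(\<lambda>x. (\<Sum>k\<in>K. b k * w k x) * u x) = (\<lambda>x. \<Sum>k\<in>K. b k * (w k x * u x))"
    by (rule ext) (simp add: sum_distrib_right mult.assoc)
  then show ?thesis unfolding l2inner_def using assms L2_prod_int
    by (simp add: integral_sum)
qed

lemma l2inner_self_nonneg: "0 \<le> l2inner M g g"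
  unfolding l2inner_def by simp

lemma l2norm_sq: "(l2norm M g)\<^sup>2 = l2inner M g g"
  unfolding l2norm_def l2inner_def by (simp add: power2_eq_square)

lemma cauchy_schwarz_sq:
  assumes "L2 M g" "L2 M h"
  shows "(l2inner M g h)\<^sup>2 \<le> l2inner M g g * l2inner M h h"
proof -
  define G where "G = l2inner M g g"
  define H where "H = l2inner M h h"
  define I where "I = l2inner M g h"
  have quad: "0 \<le> G - 2 * t * I + t\<^sup>2 * H" for t
  proof -
    have L: "L2 M (\<lambda>x. g x - t * h x)" using L2_lin[OF assms, of 1 "-t"] by simp
    have "0 \<le> l2inner M (\<lambda>x. g x - t * h x) (\<lambda>x. g x - t * h x)" by (rule l2inner_self_nonneg)
    also have "\<dots> = l2inner M g (\<lambda>x. g x - t * h x) - t * l2inner M h (\<lambda>x. g x - t * h x)"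
      using l2inner_lin[OF assms L, of 1 "-t"] by simp
    also have "l2inner M g (\<lambda>x. g x - t * h x) = G - t * I"
      using l2inner_lin[OF assms assms(1), of 1 "-t"] unfolding G_def I_def
      by (simp add: l2inner_sym)
    also have "l2inner M h (\<lambda>x. g x - t * h x) = I - t * H"
      using l2inner_lin[OF assms assms(2), of 1 "-t"] unfolding H_def I_def
      by (simp add: l2inner_sym)
    finally show ?thesis by (simp add: power2_eq_square algebra_simps)
  qed
  have "G \<ge> 0" "H \<ge> 0" unfolding G_def H_def by (simp_all add: l2inner_self_nonneg)
  show ?thesis
  proof (cases "H = 0")
    case True
    have "I = 0"
    proof (rule ccontr)
      assume "I \<noteq> 0"
      have "0 \<le> G - 2 * ((G + 1) / (2 * I)) * I" using quad[of "(G+1)/(2*I)"] True by simp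
      also have "\<dots> = -1" using \<open>I \<noteq> 0\<close> by (simp add: field_simps)
      finally show False by simp
    qed
    then show ?thesis unfolding I_def[symmetric] G_def[symmetric] H_def[symmetric] using \<open>G \<ge> 0\<close> \<open>H\<ge>0\<close> by simp
  next
    case False
    hence "H > 0" using \<open>H \<ge> 0\<close> by simp
    have "0 \<le> G - 2 * (I / H) * I + (I/H)\<^sup>2 * H" by (rule quad)
    also have "\<dots> = G - I\<^sup>2 / H" using \<open>H > 0\<close> by (simp add: field_simps power2_eq_square)
    finally have "I\<^sup>2 / H \<le> G" by simp
    hence "I\<^sup>2 \<le> G * H" using \<open>H > 0\<close> by (simp add: divide_le_eq)
    then show ?thesis unfolding I_def[symmetric] G_def[symmetric] H_def[symmetric] .
  qed
qed

lemma l2inner_null: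
  assumes "L2 M g" "L2 M h" "l2inner M g g = 0"
  shows "l2inner M g h = 0"
  using cauchy_schwarz_sq[OF assms(1,2)] assms(3) by simp

lemma cauchy_schwarz:
  assumes "L2 M g" "L2 M h"
  shows "l2inner M g h \<le> l2norm M g * l2norm M h"
proof -
  have "(l2inner M g h)\<^sup>2 \<le> (l2norm M g * l2norm M h)\<^sup>2"
    using cauchy_schwarz_sq[OF assms] by (simp add: power_mult_distrib l2norm_sq)
  moreover have "l2norm M g * l2norm M h \<ge> 0" unfolding l2norm_def by simp
  ultimately show ?thesis using power2_le_imp_le by blast
qed



lemma proj_exists:
  assumes "finite K" "\<And>k. k \<in> K \<Longrightarrow> L2 M (w k)"
  shows "L2 M g \<Longrightarrow> \<exists>b. \<forall>l\<in>K. l2inner M (\<lambda>x. g x - (\<Sum>k\<in>K. b k * w k x)) (w l) = 0"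
  using assms
proof (induction K arbitrary: g rule: finite_induct)
  case empty
  then show ?case by simp
next
  case (insert k0 K)
  have wK: "\<And>k. k \<in> K \<Longrightarrow> L2 M (w k)" using insert.prems by auto
  have wk0: "L2 M (w k0)" using insert.prems by auto
  obtain b0 where b0: "\<forall>l\<in>K. l2inner M (\<lambda>x. g x - (\<Sum>k\<in>K. b0 k * w k x)) (w l) = 0"
    using insert.IH[OF insert.prems(1) wK] by blast
  obtain bu where bu: "\<forall>l\<in>K. l2inner M (\<lambda>x. w k0 x - (\<Sum>k\<in>K. bu k * w k x)) (w l) = 0"
    using insert.IH[OF wk0 wK] by blast
  define u where "u = (\<lambda>x. w k0 x - (\<Sum>k\<in>K. bu k * w k x))"
  define R0 where "R0 = (\<lambda>x. g x - (\<Sum>k\<in>K. b0 k * w k x))"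
  have Lsb: "L2 M (\<lambda>x. \<Sum>k\<in>K. bu k * w k x)" using L2_sum[of K M w bu, OF insert.hyps(1) wK] by blast
  have Lu: "L2 M u" unfolding u_def using L2_diff[OF wk0 Lsb] .
  have LR0: "L2 M R0" unfolding R0_def using L2_diff[OF insert.prems(1) L2_sum[of K M w b0, OF insert.hyps(1) wK]] .
  have uK: "\<forall>l\<in>K. l2inner M u (w l) = 0" using bu unfolding u_def .
  have R0K: "\<forall>l\<in>K. l2inner M R0 (w l) = 0" using b0 unfolding R0_def .
  define t where "t = (if l2inner M u u = 0 then 0 else l2inner M R0 u / l2inner M u u)"
  define b where "b = (\<lambda>k. if k = k0 then t else b0 k - t * bu k)"
  have eq: "(\<lambda>x. g x - (\<Sum>k\<in>insert k0 K. b k * w k x)) = (\<lambda>x. 1 * R0 x + (-t) * u x)"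
  proof (rule ext)
    fix x
    have "(\<Sum>k\<in>insert k0 K. b k * w k x) = t * w k0 x + (\<Sum>k\<in>K. (b0 k - t * bu k) * w k x)"
      using insert.hyps by (simp add: b_def) (intro sum.cong, auto)
    also have "(\<Sum>k\<in>K. (b0 k - t * bu k) * w k x) = (\<Sum>k\<in>K. b0 k * w k x) - t * (\<Sum>k\<in>K. bu k * w k x)"
      by (simp add: sum_subtractf sum_distrib_left algebra_simps)
    finally show "g x - (\<Sum>k\<in>insert k0 K. b k * w k x) = 1 * R0 x + (-t) * u x"
      unfolding R0_def u_def by (simp add: algebra_simps)
  qed
  define R where "R = (\<lambda>x. 1 * R0 x + (-t) * u x)"
  have LR: "L2 M R" unfolding R_def by (rule L2_lin[OF LR0 Lu])
  have RK: "\<forall>l\<in>K. l2inner M R (w l) = 0"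
  proof
    fix l assume l: "l \<in> K"
    have "l2inner M R (w l) = 1 * l2inner M R0 (w l) + (-t) * l2inner M u (w l)"
      unfolding R_def by (rule l2inner_lin[OF LR0 Lu wK[OF l]])
    then show "l2inner M R (w l) = 0" using R0K uK l by simp
  qed
  have Ru: "l2inner M R u = 0"
  proof (cases "l2inner M u u = 0")
    case True
    hence "l2inner M u R = 0" using l2inner_null[OF Lu LR] by simp
    then show ?thesis by (simp add: l2inner_sym)
  next
    case False
    have "l2inner M R u = 1 * l2inner M R0 u + (-t) * l2inner M u u"
      unfolding R_def by (rule l2inner_lin[OF LR0 Lu Lu])
    then show ?thesis using False unfolding t_def by simp
  qed
  have e: "w k0 = (\<lambda>x. 1 * u x + 1 * (\<Sum>k\<in>K. bu k * w k x))" unfolding u_def by simp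
  have "l2inner M (w k0) R = 1 * l2inner M u R + 1 * l2inner M (\<lambda>x. \<Sum>k\<in>K. bu k * w k x) R"
    by (subst e, rule l2inner_lin[OF Lu Lsb LR])
  also have "l2inner M (\<lambda>x. \<Sum>k\<in>K. bu k * w k x) R = (\<Sum>k\<in>K. bu k * l2inner M (w k) R)"
    by (rule l2inner_sum[OF insert.hyps(1) wK LR])
  also have "\<dots> = 0" using RK by (simp add: l2inner_sym)
  finally have Rk0: "l2inner M R (w k0) = 0" using Ru by (simp add: l2inner_sym)
  have eqR: "(\<lambda>x. g x - (\<Sum>k\<in>insert k0 K. b k * w k x)) = R" using eq unfolding R_def .
  show ?case
  proof (intro exI[of _ b] ballI)
    fix l assume "l \<in> insert k0 K"
    then show "l2inner M (\<lambda>x. g x - (\<Sum>k\<in>insert k0 K. b k * w k x)) (w l) = 0"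
      unfolding eqR using RK Rk0 by auto
  qed
qed



lemma trig_cont: "continuous_on UNIV (trig k)"
  unfolding trig_def
  by (cases "k = 1"; cases "even k") (auto intro!: continuous_intros)

lemma trig_meas[measurable]: "trig k \<in> borel_measurable borel"
  by (rule borel_measurable_continuous_onI[OF trig_cont])

lemma trig_bound: "\<bar>trig k t\<bar> \<le> 2"
proof -
  have s: "sqrt 2 \<le> (2::real)" by (rule real_le_lsqrt) auto
  have "\<bar>sqrt 2 * cos y\<bar> \<le> 2" for y
  proof -
    have "\<bar>sqrt 2 * cos y\<bar> = sqrt 2 * \<bar>cos y\<bar>" by (simp add: abs_mult)
    also have "\<dots> \<le> sqrt 2 * 1" by (rule mult_left_mono) (auto simp: abs_cos_le_one)
    finally show ?thesis using s by linarith
  qed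
  moreover have "\<bar>sqrt 2 * sin y\<bar> \<le> 2" for y
  proof -
    have "\<bar>sqrt 2 * sin y\<bar> = sqrt 2 * \<bar>sin y\<bar>" by (simp add: abs_mult)
    also have "\<dots> \<le> sqrt 2 * 1" by (rule mult_left_mono) (auto simp: abs_sin_le_one)
    finally show ?thesis using s by linarith
  qed
  ultimately show ?thesis unfolding trig_def by auto
qed

lemma L2_integrable:
  assumes "finite_measure M" "L2 M g"
  shows "integrable M g"
proof (rule Bochner_Integration.integrable_bound[where f="\<lambda>x. 1 + (g x)\<^sup>2"])
  show "integrable M (\<lambda>x. 1 + (g x)\<^sup>2)" using assms unfolding L2_def
    by (simp add: finite_measure.integrable_const)
  show "g \<in> borel_measurable M" using assms unfolding L2_def by auto
  show "AE x in M. norm (g x) \<le> norm (1 + (g x)\<^sup>2)"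
  proof (intro AE_I2)
    fix x
    have "\<bar>g x\<bar> \<le> 1 + (g x)\<^sup>2"
    proof (cases "\<bar>g x\<bar> \<le> 1")
      case True then show ?thesis by (simp add: add_increasing2)
    next
      case False
      hence "\<bar>g x\<bar> * 1 \<le> \<bar>g x\<bar> * \<bar>g x\<bar>" by (intro mult_left_mono) auto
      also have "\<dots> = (g x)\<^sup>2" by (simp add: power2_eq_square abs_mult_self_eq)
      finally show ?thesis by simp
    qed
    then show "norm (g x) \<le> norm (1 + (g x)\<^sup>2)" by simp
  qed
qed

lemma L2_bounded:
  assumes "finite_measure M" "g \<in> borel_measurable M" "\<And>x. \<bar>g x\<bar> \<le> B"
  shows "L2 M g"
  unfolding L2_def
proof
  show "g \<in> borel_measurable M" by fact
  show "integrable M (\<lambda>x. (g x)\<^sup>2)"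
  proof (rule Bochner_Integration.integrable_bound[where f="\<lambda>x. B\<^sup>2"])
    show "integrable M (\<lambda>x. B\<^sup>2)" using assms by (simp add: finite_measure.integrable_const)
    show "(\<lambda>x. (g x)\<^sup>2) \<in> borel_measurable M" using assms by auto
    show "AE x in M. norm ((g x)\<^sup>2) \<le> norm (B\<^sup>2)"
    proof (intro AE_I2)
      fix x
      have "(g x)\<^sup>2 \<le> B\<^sup>2" using assms(3)[of x] by (metis abs_ge_zero power2_abs power_mono)
      then show "norm ((g x)\<^sup>2) \<le> norm (B\<^sup>2)" by simp
    qed
  qed
qed

locale pxs =
  fixes PX :: "pt measure" and q :: nat
  assumes P: "prob_space PX"
    and S: "sets PX = sets (PiM {1..q} (\<lambda>_. borel))"
begin

lemma fm: "finite_measure PX" using P by (simp add: prob_space_def)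

lemma comp_meas:
  assumes "j \<in> {1..q}" "h \<in> borel_measurable borel"
  shows "(\<lambda>x. h (x j)) \<in> borel_measurable PX"
proof -
  have "(\<lambda>x. x j) \<in> measurable (PiM {1..q} (\<lambda>_. borel)) borel"
    using measurable_component_singleton[OF assms(1), of "\<lambda>_. borel"] by simp
  hence "(\<lambda>x. x j) \<in> measurable PX borel"
    by (subst measurable_cong_sets[OF S refl]) assumption
  then show ?thesis using assms(2) by (rule measurable_compose)
qed

lemma Hj_L2: "g \<in> Hj PX q j \<Longrightarrow> j \<in> {1..q} \<Longrightarrow> L2 PX g"
  unfolding Hj_def L2_def using comp_meas by auto

lemma Hj_diff:
  assumes "j \<in> {1..q}" "g1 \<in> Hj PX q j" "g2 \<in> Hj PX q j"
  shows "(\<lambda>x. g1 x - g2 x) \<in> Hj PX q j"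
proof -
  obtain h1 where h1: "h1 \<in> borel_measurable borel" "integrable PX (\<lambda>x. (h1 (x j))\<^sup>2)"
     "j < q \<longrightarrow> (\<integral>x. h1 (x j) \<partial>PX) = 0" "g1 = (\<lambda>x. h1 (x j))"
    using assms(2) unfolding Hj_def by blast
  obtain h2 where h2: "h2 \<in> borel_measurable borel" "integrable PX (\<lambda>x. (h2 (x j))\<^sup>2)"
     "j < q \<longrightarrow> (\<integral>x. h2 (x j) \<partial>PX) = 0" "g2 = (\<lambda>x. h2 (x j))"
    using assms(3) unfolding Hj_def by blast
  have L1: "L2 PX g1" "L2 PX g2" using Hj_L2 assms by auto
  have "L2 PX (\<lambda>x. g1 x - g2 x)" using L2_diff[OF L1] .
  moreover have "integrable PX g1" "integrable PX g2" using L2_integrable[OF fm] L1 by auto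
  ultimately show ?thesis unfolding Hj_def L2_def using h1 h2
    by (intro CollectI exI[of _ "\<lambda>t. h1 t - h2 t"]) auto
qed

lemma Hj_scale:
  assumes "j \<in> {1..q}" "g \<in> Hj PX q j"
  shows "(\<lambda>x. a * g x) \<in> Hj PX q j"
proof -
  obtain h where h: "h \<in> borel_measurable borel" "integrable PX (\<lambda>x. (h (x j))\<^sup>2)"
     "j < q \<longrightarrow> (\<integral>x. h (x j) \<partial>PX) = 0" "g = (\<lambda>x. h (x j))"
    using assms(2) unfolding Hj_def by blast
  have "L2 PX (\<lambda>x. a * g x)" using L2_scale Hj_L2 assms by blast
  then show ?thesis unfolding Hj_def L2_def using h
    by (intro CollectI exI[of _ "\<lambda>t. a * h t"]) auto
qed

lemma Hj_zero: "(\<lambda>x. 0) \<in> Hj PX q j"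
  unfolding Hj_def by (intro CollectI exI[of _ "\<lambda>t. 0"]) auto

lemma trig_L2: "j \<in> {1..q} \<Longrightarrow> L2 PX (\<lambda>x. trig k (x j))"
  by (rule L2_bounded[OF fm comp_meas trig_bound]) auto

definition cE :: "nat \<Rightarrow> nat \<Rightarrow> real" where
  "cE j k = (\<integral>x. trig k (x j) \<partial>PX)"

definition wb :: "nat \<Rightarrow> nat \<Rightarrow> pt \<Rightarrow> real" where
  "wb j k = (if j < q then (\<lambda>x. trig k (x j) - cE j k) else (\<lambda>x. trig k (x j)))"

definition Ks :: "nat \<Rightarrow> nat \<Rightarrow> nat set" where
  "Ks j mm = (if j < q then {2..mm} else {1..mm})"

lemma wb_L2: "j \<in> {1..q} \<Longrightarrow> L2 PX (wb j k)"
  unfolding wb_def using trig_L2 L2_diff L2_const[OF fm] by auto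

lemma trig_int: "j \<in> {1..q} \<Longrightarrow> integrable PX (\<lambda>x. trig k (x j))"
  using L2_integrable[OF fm trig_L2] .

lemma cE1: "cE j 1 = 1"
  unfolding cE_def trig_def using P by (simp add: prob_space.prob_space prob_space.emeasure_space_1)

end



lemma trig1[simp]: "trig 1 t = 1" unfolding trig_def by simp
lemma trigS0[simp]: "trig (Suc 0) t = 1" unfolding trig_def by simp

context pxs
begin

lemma int_lc:
  assumes "j \<in> {1..q}" "finite K"
  shows "(\<integral>x. (\<Sum>k\<in>K. b k * trig k (x j)) \<partial>PX) = (\<Sum>k\<in>K. b k * cE j k)"
  unfolding cE_def using trig_int[OF assms(1)] assms(2)
  by (simp add: integral_sum)

lemma Vj_char_a:
  assumes j: "j \<in> {1..q}" and mm: "1 \<le> mm" and g: "g \<in> Vj PX q j mm"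
  shows "\<exists>b. g = (\<lambda>x. \<Sum>k\<in>Ks j mm. b k * wb j k x)"
proof -
  obtain a where a: "g = (\<lambda>x. \<Sum>k=1..mm. a k * trig k (x j))" using g unfolding Vj_def by blast
  obtain h where h: "j < q \<longrightarrow> (\<integral>x. h (x j) \<partial>PX) = 0" "g = (\<lambda>x. h (x j))"
    using g unfolding Vj_def Hj_def by blast
  have ins: "{1..mm} = insert 1 {2..mm}" using mm by auto
  show ?thesis
  proof (cases "j < q")
    case True
    have "(\<integral>x. g x \<partial>PX) = 0" using h True by simp
    hence z: "(\<Sum>k=1..mm. a k * cE j k) = 0" using int_lc[OF j, of "{1..mm}" a] a by simp
    have "g = (\<lambda>x. \<Sum>k\<in>Ks j mm. a k * wb j k x)"
    proof (rule ext)
      fix x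
      have "g x = (\<Sum>k=1..mm. a k * trig k (x j)) - (\<Sum>k=1..mm. a k * cE j k)" using a z by simp
      also have "\<dots> = (\<Sum>k=1..mm. a k * (trig k (x j) - cE j k))"
        by (simp add: sum_subtractf right_diff_distrib)
      also have "\<dots> = (\<Sum>k=2..mm. a k * (trig k (x j) - cE j k))"
        unfolding ins using cE1[of j] by simp
      finally show "g x = (\<Sum>k\<in>Ks j mm. a k * wb j k x)" using True by (simp add: Ks_def wb_def)
    qed
    then show ?thesis by blast
  next
    case False
    then show ?thesis using a by (intro exI[of _ a]) (simp add: Ks_def wb_def)
  qed
qed

lemma wb_int0:
  assumes "j \<in> {1..q}" "j < q" shows "(\<integral>x. wb j k x \<partial>PX) = 0"
proof -
  have "(\<integral>x. trig k (x j) - cE j k \<partial>PX) = (\<integral>x. trig k (x j) \<partial>PX) - (\<integral>x. cE j k \<partial>PX)"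
    by (rule Bochner_Integration.integral_diff) (use trig_int[OF assms(1)] fm in \<open>auto simp: finite_measure.integrable_const\<close>)
  also have "(\<integral>x. cE j k \<partial>PX) = cE j k" using prob_space.prob_space[OF P] by simp
  finally show ?thesis unfolding wb_def using assms by (simp add: cE_def)
qed

lemma Vj_char_b:
  assumes j: "j \<in> {1..q}" and mm: "1 \<le> mm"
  shows "(\<lambda>x. \<Sum>k\<in>Ks j mm. b k * wb j k x) \<in> Vj PX q j mm"
proof -
  define g where "g = (\<lambda>x. \<Sum>k\<in>Ks j mm. b k * wb j k x)"
  have Lg: "L2 PX g" unfolding g_def by (rule L2_sum) (auto simp: Ks_def intro: wb_L2[OF j])
  have ins: "{1..mm} = insert 1 {2..mm}" using mm by auto
  show ?thesis
  proof (cases "j < q")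
    case True
    define h where "h = (\<lambda>t. \<Sum>k=2..mm. b k * (trig k t - cE j k))"
    have gh: "g = (\<lambda>x. h (x j))" unfolding g_def h_def using True by (simp add: Ks_def wb_def)
    define a where "a = (\<lambda>k. if k = 1 then - (\<Sum>k=2..mm. b k * cE j k) else b k)"
    have ga: "g = (\<lambda>x. \<Sum>k=1..mm. a k * trig k (x j))"
    proof (rule ext)
      fix x
      have "(\<Sum>k=1..mm. a k * trig k (x j)) = a 1 + (\<Sum>k=2..mm. a k * trig k (x j))"
        unfolding ins by simp
      also have "(\<Sum>k=2..mm. a k * trig k (x j)) = (\<Sum>k=2..mm. b k * trig k (x j))"
        by (rule sum.cong) (auto simp: a_def)
      finally show "g x = (\<Sum>k=1..mm. a k * trig k (x j))"
        unfolding gh h_def a_def by (simp add: right_diff_distrib sum_subtractf)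
    qed
    have "(\<integral>x. g x \<partial>PX) = (\<Sum>k\<in>Ks j mm. b k * (\<integral>x. wb j k x \<partial>PX))"
      unfolding g_def using L2_integrable[OF fm wb_L2[OF j]]
      by (simp add: integral_sum Ks_def)
    also have "\<dots> = 0" using wb_int0[OF j True] by simp
    finally have i0: "(\<integral>x. g x \<partial>PX) = 0" .
    have hm: "h \<in> borel_measurable borel" unfolding h_def by measurable
    have "g \<in> Hj PX q j" unfolding Hj_def
    proof (intro CollectI exI[of _ h] conjI)
      show "integrable PX (\<lambda>x. (h (x j))\<^sup>2)" using Lg unfolding gh L2_def by simp
      show "j < q \<longrightarrow> (\<integral>x. h (x j) \<partial>PX) = 0" using i0 unfolding gh by simp
    qed (auto simp: hm gh)
    moreover have "g \<in> {g. \<exists>a::nat \<Rightarrow> real. g = (\<lambda>x. \<Sum>k=1..mm. a k * trig k (x j))}"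
      using ga by blast
    ultimately show ?thesis unfolding Vj_def g_def by blast
  next
    case False
    define h where "h = (\<lambda>t. \<Sum>k=1..mm. b k * trig k t)"
    have gh: "g = (\<lambda>x. h (x j))" unfolding g_def h_def using False by (simp add: Ks_def wb_def)
    have hm: "h \<in> borel_measurable borel" unfolding h_def by measurable
    have "g \<in> Hj PX q j" unfolding Hj_def
    proof (intro CollectI exI[of _ h] conjI)
      show "integrable PX (\<lambda>x. (h (x j))\<^sup>2)" using Lg unfolding gh L2_def by simp
    qed (auto simp: hm gh False)
    moreover have "g \<in> {g. \<exists>a::nat \<Rightarrow> real. g = (\<lambda>x. \<Sum>k=1..mm. a k * trig k (x j))}"
      using gh unfolding h_def by blast
    ultimately show ?thesis unfolding Vj_def g_def by blast
  qed
qed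

lemma Vj_Hj: "Vj PX q j mm \<subseteq> Hj PX q j" unfolding Vj_def by auto

lemma projV_in:
  assumes j: "j \<in> {1..q}" and mm: "1 \<le> mm" and g: "L2 PX g"
  shows "projV PX q j mm g \<in> Vj PX q j mm \<and>
     (\<forall>w\<in>Vj PX q j mm. l2inner PX (\<lambda>x. g x - projV PX q j mm g x) w = 0)"
proof -
  have fin: "finite (Ks j mm)" by (simp add: Ks_def)
  have wL: "\<And>k. k \<in> Ks j mm \<Longrightarrow> L2 PX (wb j k)" using wb_L2[OF j] by blast
  obtain b where b: "\<forall>l\<in>Ks j mm. l2inner PX (\<lambda>x. g x - (\<Sum>k\<in>Ks j mm. b k * wb j k x)) (wb j l) = 0"
    using proj_exists[of "Ks j mm" PX "wb j" g, OF fin wL g] by blast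
  define v where "v = (\<lambda>x. \<Sum>k\<in>Ks j mm. b k * wb j k x)"
  have vV: "v \<in> Vj PX q j mm" unfolding v_def by (rule Vj_char_b[OF j mm])
  have Lv: "L2 PX v" unfolding v_def by (rule L2_sum[OF fin wL])
  have LR: "L2 PX (\<lambda>x. g x - v x)" by (rule L2_diff[OF g Lv])
  have orth: "\<forall>w\<in>Vj PX q j mm. l2inner PX (\<lambda>x. g x - v x) w = 0"
  proof
    fix w assume "w \<in> Vj PX q j mm"
    then obtain b' where w: "w = (\<lambda>x. \<Sum>k\<in>Ks j mm. b' k * wb j k x)" using Vj_char_a[OF j mm] by blast
    have "l2inner PX (\<lambda>x. g x - v x) w = l2inner PX w (\<lambda>x. g x - v x)" by (rule l2inner_sym)
    also have "\<dots> = (\<Sum>k\<in>Ks j mm. b' k * l2inner PX (wb j k) (\<lambda>x. g x - v x))"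
      unfolding w by (rule l2inner_sum[OF fin wL LR])
    also have "\<dots> = 0" using b unfolding v_def by (simp add: l2inner_sym)
    finally show "l2inner PX (\<lambda>x. g x - v x) w = 0" .
  qed
  have ex: "\<exists>v. v \<in> Vj PX q j mm \<and> (\<forall>w\<in>Vj PX q j mm. l2inner PX (\<lambda>x. g x - v x) w = 0)"
    using vV orth by blast
  show ?thesis unfolding projV_def by (rule someI_ex[OF ex])
qed

lemma HJ_L2:
  assumes "J \<subseteq> {1..q}" "h \<in> HJ PX q J"
  shows "L2 PX h"
proof -
  obtain gs where gs: "\<forall>j\<in>J. gs j \<in> Hj PX q j" "h = (\<lambda>x. \<Sum>j\<in>J. gs j x)"
    using assms(2) unfolding HJ_def by blast
  have "finite J" using assms(1) finite_subset by blast
  then show ?thesis unfolding gs(2)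
  proof (intro L2_sum_gen)
    fix j assume "j \<in> J"
    then show "L2 PX (gs j)" using gs(1) assms(1) Hj_L2 by blast
  qed
qed

lemma l2norm_nonneg: "0 \<le> l2norm PX g" unfolding l2norm_def by simp

definition rhoset :: "nat \<Rightarrow> real set" where
  "rhoset qs = insert 0
     {l2inner PX h1 h2 / (l2norm PX h1 * l2norm PX h2) | h1 h2 J1 J2.
        J1 \<subseteq> {1..q} \<and> J2 \<subseteq> {1..q} \<and> J1 \<inter> J2 = {} \<and> card J1 \<le> qs \<and> card J2 \<le> qs \<and>
        h1 \<in> HJ PX q J1 \<and> h2 \<in> HJ PX q J2 \<and> l2norm PX h1 > 0 \<and> l2norm PX h2 > 0}"

lemma rho_eq: "rho PX q qs = Sup (rhoset qs)" unfolding rho_def rhoset_def by simp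

lemma rhoset_bdd: "bdd_above (rhoset qs)"
proof (rule bdd_aboveI[of _ 1])
  fix r assume "r \<in> rhoset qs"
  then show "r \<le> 1" unfolding rhoset_def
  proof (elim insertE)
    assume "r = 0" then show ?thesis by simp
  next
    assume "r \<in> {l2inner PX h1 h2 / (l2norm PX h1 * l2norm PX h2) | h1 h2 J1 J2.
        J1 \<subseteq> {1..q} \<and> J2 \<subseteq> {1..q} \<and> J1 \<inter> J2 = {} \<and> card J1 \<le> qs \<and> card J2 \<le> qs \<and>
        h1 \<in> HJ PX q J1 \<and> h2 \<in> HJ PX q J2 \<and> l2norm PX h1 > 0 \<and> l2norm PX h2 > 0}"
    then obtain h1 h2 J1 J2 where H: "r = l2inner PX h1 h2 / (l2norm PX h1 * l2norm PX h2)"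
      "J1 \<subseteq> {1..q}" "J2 \<subseteq> {1..q}" "h1 \<in> HJ PX q J1" "h2 \<in> HJ PX q J2"
      "l2norm PX h1 > 0" "l2norm PX h2 > 0" by blast
    have "l2inner PX h1 h2 \<le> l2norm PX h1 * l2norm PX h2"
      using cauchy_schwarz HJ_L2 H by blast
    moreover have "l2norm PX h1 * l2norm PX h2 > 0" using H by simp
    ultimately show ?thesis using H(1) by simp
  qed
qed

lemma rho_nonneg: "0 \<le> rho PX q qs"
  unfolding rho_eq by (rule cSup_upper[OF _ rhoset_bdd]) (simp add: rhoset_def)

lemma rho_indep:
  assumes rho1: "rho PX q qs < 1" and J: "J \<subseteq> {1..q}" "card J \<le> qs"
    and G: "\<forall>j\<in>J. G j \<in> Hj PX q j" and AE0: "AE x in PX. (\<Sum>j\<in>J. G j x) = 0"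
    and j0: "j0 \<in> J"
  shows "l2norm PX (G j0) = 0"
proof (rule ccontr)
  assume ne: "l2norm PX (G j0) \<noteq> 0"
  hence pos: "l2norm PX (G j0) > 0" using l2norm_nonneg[of "G j0"] by simp
  have finJ: "finite J" using J(1) finite_subset by blast
  have j0q: "j0 \<in> {1..q}" using J j0 by auto
  define h1 where "h1 = (\<lambda>x. (-1) * G j0 x)"
  define h2 where "h2 = (\<lambda>x. \<Sum>j\<in>J-{j0}. G j x)"
  have h1H: "h1 \<in> Hj PX q j0" unfolding h1_def using Hj_scale[OF j0q] G j0 by blast
  have h1HJ: "h1 \<in> HJ PX q {j0}" unfolding HJ_def using h1H
    by (intro CollectI exI[of _ "\<lambda>_. h1"]) auto
  have h2HJ: "h2 \<in> HJ PX q (J-{j0})" unfolding HJ_def h2_def using G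
    by (intro CollectI exI[of _ G]) auto
  have L1: "L2 PX h1" using HJ_L2[OF _ h1HJ] j0q by auto
  have L2': "L2 PX h2" using HJ_L2[OF _ h2HJ] J by auto
  have ae: "AE x in PX. h2 x = h1 x"
    using AE0 by eventually_elim (simp add: h1_def h2_def sum.remove[OF finJ j0])
  have n1: "l2norm PX h1 = l2norm PX (G j0)" unfolding l2norm_def h1_def by simp
  have n2: "l2norm PX h2 = l2norm PX h1" unfolding l2norm_def
    using ae L1 L2' unfolding L2_def by (intro arg_cong[where f=sqrt] integral_cong_AE) auto
  have i12: "l2inner PX h1 h2 = (l2norm PX h1)\<^sup>2" unfolding l2norm_sq l2inner_def
    using ae L1 L2' unfolding L2_def by (intro integral_cong_AE) auto
  have "1 = l2inner PX h1 h2 / (l2norm PX h1 * l2norm PX h2)"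
    using pos n1 n2 i12 by (simp add: power2_eq_square)
  moreover have "card J \<ge> 1" using finJ j0 by (metis One_nat_def Suc_leI card_gt_0_iff empty_iff)
  ultimately have "1 \<in> rhoset qs" unfolding rhoset_def using J j0q pos n1 n2 h1HJ h2HJ
    by (intro insertI2 CollectI exI[of _ h1] exI[of _ h2] exI[of _ "{j0}"] exI[of _ "J-{j0}"])
       (auto intro: order_trans[OF card_Diff1_le[of J j0]])
  hence "1 \<le> rho PX q qs" unfolding rho_eq by (rule cSup_upper[OF _ rhoset_bdd])
  then show False using rho1 by simp
qed

end



lemma int_cos:
  fixes N :: int
  shows "((\<lambda>t. cos (2*pi* of_int N*t)) has_integral (if N = 0 then 1 else 0)) {0..1::real}"
proof (cases "N = 0")
  case True
  then show ?thesis using has_integral_const_real[of 1 0 1] by simp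
next
  case False
  define w where "w = 2*pi* of_int N"
  have w: "w \<noteq> 0" using False by (simp add: w_def)
  have d: "((\<lambda>t. sin (w*t) / w) has_vector_derivative cos (w*t)) (at t within {0..1})" for t
  proof -
    have "((\<lambda>t. sin (w*t) / w) has_real_derivative cos (w*t) * (w * 1) / w) (at t within {0..1})"
      by (auto intro!: derivative_eq_intros)
    then show ?thesis using w by (simp add: has_real_derivative_iff_has_vector_derivative)
  qed
  have "((\<lambda>t. cos (w*t)) has_integral (sin (w*1)/w - sin (w*0)/w)) {0..1::real}"
    by (rule fundamental_theorem_of_calculus) (use d in auto)
  moreover have "sin (w*1) = 0" unfolding w_def by simp
  ultimately show ?thesis using False unfolding w_def by (simp add: mult.assoc)
qed

lemma int_sin:
  fixes N :: int
  shows "((\<lambda>t. sin (2*pi* of_int N*t)) has_integral 0) {0..1::real}"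
proof (cases "N = 0")
  case True
  then show ?thesis by simp
next
  case False
  define w where "w = 2*pi* of_int N"
  have w: "w \<noteq> 0" using False by (simp add: w_def)
  have d: "((\<lambda>t. - cos (w*t) / w) has_vector_derivative sin (w*t)) (at t within {0..1})" for t
  proof -
    have "((\<lambda>t. - cos (w*t) / w) has_real_derivative - (- sin (w*t) * (w * 1)) / w) (at t within {0..1})"
      by (auto intro!: derivative_eq_intros)
    then show ?thesis using w by (simp add: has_real_derivative_iff_has_vector_derivative)
  qed
  have "((\<lambda>t. sin (w*t)) has_integral (- cos (w*1)/w - - cos (w*0)/w)) {0..1::real}"
    by (rule fundamental_theorem_of_calculus) (use d in auto)
  moreover have "cos (w*1) = 1" unfolding w_def by simp
  ultimately show ?thesis unfolding w_def by (simp add: mult.assoc)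
qed

lemma trig_even: "k \<ge> 2 \<Longrightarrow> even k \<Longrightarrow> trig k t = sqrt 2 * cos (2*pi* of_int (int (k div 2))*t)"
  unfolding trig_def by simp
lemma trig_odd: "k \<ge> 2 \<Longrightarrow> odd k \<Longrightarrow> trig k t = sqrt 2 * sin (2*pi* of_int (int (k div 2))*t)"
  unfolding trig_def by simp

lemma sq2: "sqrt 2 * sqrt 2 = (2::real)" by simp

lemma trig_orth:
  assumes "k \<ge> 1" "l \<ge> 1"
  shows "((\<lambda>t. trig k t * trig l t) has_integral (if k = l then 1 else 0)) {0..1::real}"
proof -
  define n where "n = int (k div 2)"
  define n' where "n' = int (l div 2)"
  have cc: "cos (2*pi* of_int a*t) * cos (2*pi* of_int b*t) =
      (cos (2*pi* of_int (a-b)*t) + cos (2*pi* of_int (a+b)*t)) / 2" for a b :: int and t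
    by (simp add: cos_diff cos_add algebra_simps)
  have ss: "sin (2*pi* of_int a*t) * sin (2*pi* of_int b*t) =
      (cos (2*pi* of_int (a-b)*t) - cos (2*pi* of_int (a+b)*t)) / 2" for a b :: int and t
    by (simp add: cos_diff cos_add algebra_simps)
  have cs: "cos (2*pi* of_int a*t) * sin (2*pi* of_int b*t) =
      (sin (2*pi* of_int (a+b)*t) - sin (2*pi* of_int (a-b)*t)) / 2" for a b :: int and t
    by (simp add: sin_diff sin_add algebra_simps)
  consider "k = 1" "l = 1" | "k = 1" "l \<ge> 2" | "k \<ge> 2" "l = 1" | "k \<ge> 2" "l \<ge> 2"
    using assms by linarith
  then show ?thesis
  proof cases
    case 1 then show ?thesis using has_integral_const_real[of 1 0 1] by simp
  next
    case 2
    have n0: "n' \<noteq> 0" using 2 unfolding n'_def by auto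
    show ?thesis
    proof (cases "even l")
      case True
      have "((\<lambda>t. sqrt 2 * cos (2*pi* of_int n'*t)) has_integral sqrt 2 * 0) {0..1::real}"
        using has_integral_mult_right[OF int_cos[of n']] n0 by simp
      then show ?thesis using 2 True trig_even[of l] unfolding n'_def by simp
    next
      case False
      have "((\<lambda>t. sqrt 2 * sin (2*pi* of_int n'*t)) has_integral sqrt 2 * 0) {0..1::real}"
        using has_integral_mult_right[OF int_sin[of n']] by simp
      then show ?thesis using 2 False trig_odd[of l] unfolding n'_def by simp
    qed
  next
    case 3
    have n0: "n \<noteq> 0" using 3 unfolding n_def by auto
    show ?thesis
    proof (cases "even k")
      case True
      have "((\<lambda>t. sqrt 2 * cos (2*pi* of_int n*t)) has_integral sqrt 2 * 0) {0..1::real}"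
        using has_integral_mult_right[OF int_cos[of n]] n0 by simp
      then show ?thesis using 3 True trig_even[of k] unfolding n_def by simp
    next
      case False
      have "((\<lambda>t. sqrt 2 * sin (2*pi* of_int n*t)) has_integral sqrt 2 * 0) {0..1::real}"
        using has_integral_mult_right[OF int_sin[of n]] by simp
      then show ?thesis using 3 False trig_odd[of k] unfolding n_def by simp
    qed
  next
    case 4
    have pos: "n \<ge> 1" "n' \<ge> 1" using 4 unfolding n_def n'_def by auto
    have nz: "n + n' \<noteq> 0" using pos by simp
    have eqn: "(n - n' = 0) \<longleftrightarrow> n = n'" by simp
    consider "even k" "even l" | "odd k" "odd l" | "even k" "odd l" | "odd k" "even l" by blast
    then show ?thesis
    proof cases
      case 1
      have f: "(\<lambda>t. trig k t * trig l t) = (\<lambda>t. cos (2*pi* of_int (n-n')*t) + cos (2*pi* of_int (n+n')*t))"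
      proof (rule ext)
        fix t
        have "trig k t * trig l t = (sqrt 2 * sqrt 2) * (cos (2*pi * of_int n*t) * cos (2*pi * of_int n'*t))"
          using 4 1 by (simp add: trig_even n_def n'_def mult_ac)
        also have "\<dots> = cos (2*pi * of_int (n-n')*t) + cos (2*pi * of_int (n+n')*t)"
          unfolding sq2 cc by simp
        finally show "trig k t * trig l t = cos (2*pi * of_int (n-n')*t) + cos (2*pi * of_int (n+n')*t)" .
      qed
      have "((\<lambda>t. trig k t * trig l t) has_integral ((if n - n' = 0 then 1 else 0) + (if n + n' = 0 then 1 else 0))) {0..1::real}"
        unfolding f by (intro has_integral_add int_cos)
      moreover have "(n = n') \<longleftrightarrow> k = l" using 1 unfolding n_def n'_def by (auto elim!: evenE)
      ultimately show ?thesis using nz by simp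
    next
      case 2
      have f: "(\<lambda>t. trig k t * trig l t) = (\<lambda>t. cos (2*pi* of_int (n-n')*t) - cos (2*pi* of_int (n+n')*t))"
      proof (rule ext)
        fix t
        have "trig k t * trig l t = (sqrt 2 * sqrt 2) * (sin (2*pi * of_int n*t) * sin (2*pi * of_int n'*t))"
          using 4 2 by (simp add: trig_even trig_odd n_def n'_def mult_ac)
        also have "\<dots> = cos (2*pi * of_int (n-n')*t) - cos (2*pi * of_int (n+n')*t)"
          unfolding sq2 ss by simp
        finally show "trig k t * trig l t = cos (2*pi * of_int (n-n')*t) - cos (2*pi * of_int (n+n')*t)" .
      qed
      have "((\<lambda>t. trig k t * trig l t) has_integral ((if n - n' = 0 then 1 else 0) - (if n + n' = 0 then 1 else 0))) {0..1::real}"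
        unfolding f by (intro has_integral_diff int_cos)
      moreover have "(n = n') \<longleftrightarrow> k = l" using 2 unfolding n_def n'_def by (auto elim!: oddE)
      ultimately show ?thesis using nz by simp
    next
      case 3
      have f: "(\<lambda>t. trig k t * trig l t) = (\<lambda>t. sin (2*pi* of_int (n+n')*t) - sin (2*pi* of_int (n-n')*t))"
      proof (rule ext)
        fix t
        have "trig k t * trig l t = (sqrt 2 * sqrt 2) * (cos (2*pi * of_int n*t) * sin (2*pi * of_int n'*t))"
          using 4 3 by (simp add: trig_even trig_odd n_def n'_def mult_ac)
        also have "\<dots> = sin (2*pi * of_int (n+n')*t) - sin (2*pi * of_int (n-n')*t)"
          unfolding sq2 cs by simp
        finally show "trig k t * trig l t = sin (2*pi * of_int (n+n')*t) - sin (2*pi * of_int (n-n')*t)" .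
      qed
      have "((\<lambda>t. trig k t * trig l t) has_integral (0 - 0)) {0..1::real}"
        unfolding f by (intro has_integral_diff int_sin)
      moreover have "k \<noteq> l" using 3 by auto
      ultimately show ?thesis by simp
    next
      case 4
      have f: "(\<lambda>t. trig k t * trig l t) = (\<lambda>t. sin (2*pi* of_int (n'+n)*t) - sin (2*pi* of_int (n'-n)*t))"
      proof (rule ext)
        fix t
        have "trig k t * trig l t = (sqrt 2 * sqrt 2) * (cos (2*pi * of_int n'*t) * sin (2*pi * of_int n*t))"
          using \<open>k \<ge> 2\<close> \<open>l \<ge> 2\<close> 4 by (simp add: trig_even trig_odd n_def n'_def mult_ac)
        also have "\<dots> = sin (2*pi * of_int (n'+n)*t) - sin (2*pi * of_int (n'-n)*t)"
          unfolding sq2 cs by simp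
        finally show "trig k t * trig l t = sin (2*pi * of_int (n'+n)*t) - sin (2*pi * of_int (n'-n)*t)" .
      qed
      have "((\<lambda>t. trig k t * trig l t) has_integral (0 - 0)) {0..1::real}"
        unfolding f by (intro has_integral_diff int_sin)
      moreover have "k \<noteq> l" using 4 by auto
      ultimately show ?thesis by simp
    qed
  qed
qed



lemma trig_cont_on: "continuous_on S (trig k)"
  using trig_cont continuous_on_subset by blast

lemma poly_zero:
  assumes fin: "finite K" and K1: "\<forall>k\<in>K. k \<ge> 1" and C: "C = 0 \<or> 1 \<notin> K" and l: "l \<in> K"
    and ae: "AE t in lborel. t \<in> {0..1} \<longrightarrow> (\<Sum>k\<in>K. a k * trig k t) - C = 0"
  shows "a l = 0"
proof -
  define P where "P = (\<lambda>t. ((\<Sum>k\<in>K. a k * trig k t) - C) * trig l t)"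
  have l1: "l \<ge> 1" using K1 l by auto
  have h1: "((\<lambda>t. \<Sum>k\<in>K. a k * (trig k t * trig l t)) has_integral (\<Sum>k\<in>K. a k * (if k = l then 1 else 0))) {0..1::real}"
    using fin K1 l1 by (intro has_integral_sum has_integral_mult_right trig_orth) auto
  have s1: "(\<Sum>k\<in>K. a k * (if k = l then 1 else 0)) = a l" using fin l by (simp add: if_distrib sum.delta cong: if_cong)
  have h2: "((\<lambda>t. C * (trig 1 t * trig l t)) has_integral C * (if 1 = l then 1 else 0)) {0..1::real}"
    using l1 by (intro has_integral_mult_right trig_orth) auto
  have s2: "C * (if 1 = l then 1 else 0) = (0::real)" using C l by auto
  have "(P has_integral (a l - 0)) {0..1::real}"
  proof -
    have "P = (\<lambda>t. (\<Sum>k\<in>K. a k * (trig k t * trig l t)) - C * (trig 1 t * trig l t))"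
    proof (rule ext)
      fix t
      have e1: "(\<Sum>k\<in>K. a k * trig k t) * trig l t = (\<Sum>k\<in>K. a k * (trig k t * trig l t))"
        by (simp add: sum_distrib_right mult.assoc)
      show "P t = (\<Sum>k\<in>K. a k * (trig k t * trig l t)) - C * (trig 1 t * trig l t)"
        unfolding P_def using e1 by (simp add: left_diff_distrib)
    qed
    then show ?thesis using has_integral_diff[OF h1 h2] unfolding s1 s2 by simp
  qed
  hence hi: "integral {0..1} P = a l" by (simp add: integral_unique)
  have cP: "continuous_on {0..1} P" unfolding P_def
    by (intro continuous_intros trig_cont_on)
  have si: "set_integrable lborel {0..1::real} P"
    unfolding set_integrable_def by (rule borel_integrable_compact[OF compact_Icc cP])
  have "(LINT t:{0..1}|lborel. P t) = integral {0..1} P"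
    by (rule set_borel_integral_eq_integral(2)[OF si])
  moreover have "(LINT t:{0..1}|lborel. P t) = 0"
    unfolding set_lebesgue_integral_def
    by (rule integral_eq_zero_AE) (use ae in \<open>eventually_elim, auto simp: P_def indicator_def\<close>)
  ultimately show ?thesis using hi by simp
qed

context pxs
begin

lemma ae_to_leb:
  fixes Q :: "real \<Rightarrow> real"
  assumes j: "j \<in> {1..q}" and dist: "distributed PX lborel (\<lambda>x. x j) (\<lambda>t. ennreal (p t))"
    and ppos: "\<forall>t\<in>{0..1}. p t > 0"
    and Qm: "Q \<in> borel_measurable borel"
    and ae: "AE x in PX. Q (x j) = 0"
  shows "AE t in lborel. t \<in> {0..1} \<longrightarrow> Q t = 0"
proof -
  have D: "distr PX lborel (\<lambda>x. x j) = density lborel (\<lambda>t. ennreal (p t))"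
    "(\<lambda>t. ennreal (p t)) \<in> borel_measurable lborel" "(\<lambda>x. x j) \<in> measurable PX lborel"
    using dist unfolding distributed_def by auto
  have Qm': "Q \<in> borel_measurable lborel" using Qm by simp
  have "{t \<in> space lborel. Q t = 0} = Q -` {0} \<inter> space lborel" by auto
  hence ms: "{t \<in> space lborel. Q t = 0} \<in> sets lborel" using measurable_sets[OF Qm' borel_closed[OF closed_singleton[of "0::real"]]] by simp
  have "AE t in distr PX lborel (\<lambda>x. x j). Q t = 0"
    using AE_distr_iff[OF D(3) ms] ae by simp
  hence "AE t in lborel. 0 < ennreal (p t) \<longrightarrow> Q t = 0"
    unfolding D(1) using AE_density[OF D(2)] by simp
  then show ?thesis by eventually_elim (use ppos in auto)
qed

end



interpretation fv: vector_space "\<lambda>(r::real) (f::pt \<Rightarrow> real) x. r * f x"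
  by unfold_locales (auto simp: fun_eq_iff algebra_simps)

lemma fun_sum: "(\<Sum>a\<in>A. F a) = (\<lambda>x. \<Sum>a\<in>A. (F a x :: real))" for F :: "'b \<Rightarrow> pt \<Rightarrow> real"
proof (induction A rule: infinite_finite_induct)
  case (infinite A) then show ?case by (simp add: zero_fun_def)
next
  case empty then show ?case by (simp add: zero_fun_def)
next
  case (insert a A) then show ?case by (simp add: plus_fun_def)
qed

lemma l2norm_zero_AE:
  assumes "L2 M g" "l2norm M g = 0"
  shows "AE x in M. g x = 0"
proof -
  have "(\<integral>x. (g x)\<^sup>2 \<partial>M) = 0" using assms(2) unfolding l2norm_def by simp
  moreover have "integrable M (\<lambda>x. (g x)\<^sup>2)" using assms(1) unfolding L2_def by simp
  ultimately have "AE x in M. (g x)\<^sup>2 = 0"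
    using integral_nonneg_eq_0_iff_AE[of M "\<lambda>x. (g x)\<^sup>2"] by simp
  then show ?thesis by eventually_elim simp
qed

lemma l2norm_zero_fun: "l2norm M (\<lambda>x. 0) = 0" unfolding l2norm_def by simp

definition indepL2 :: "pt measure \<Rightarrow> (pt \<Rightarrow> real) set \<Rightarrow> bool" where
  "indepL2 M B \<longleftrightarrow> (\<forall>a. l2norm M (\<lambda>x. \<Sum>b\<in>B. a b * b x) = 0 \<longrightarrow> (\<forall>b\<in>B. a b = 0))"

lemma indepL2_fv:
  assumes "finite B" "indepL2 M B"
  shows "fv.independent B"
  unfolding fv.dependent_explicit
proof
  assume "\<exists>t u. finite t \<and> t \<subseteq> B \<and> (\<Sum>v\<in>t. (\<lambda>x. u v * v x)) = 0 \<and> (\<exists>v\<in>t. u v \<noteq> 0)"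
  then obtain t u v where tu: "finite t" "t \<subseteq> B" "(\<Sum>v\<in>t. (\<lambda>x. u v * v x)) = 0" "v \<in> t" "u v \<noteq> 0"
    by blast
  define a where "a = (\<lambda>b. if b \<in> t then u b else 0)"
  have z: "(\<lambda>x. \<Sum>v\<in>t. u v * v x) = (\<lambda>x. 0)" using tu(3) unfolding fun_sum by (simp add: zero_fun_def)
  have "(\<lambda>x. \<Sum>b\<in>B. a b * b x) = (\<lambda>x. \<Sum>v\<in>t. u v * v x)"
  proof (rule ext)
    fix x
    have "(\<Sum>b\<in>B. a b * b x) = (\<Sum>b\<in>B. if b \<in> t then u b * b x else 0)"
      unfolding a_def by (rule sum.cong) auto
    also have "\<dots> = (\<Sum>b\<in>B \<inter> t. u b * b x)" by (simp add: sum.inter_restrict[OF assms(1)])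
    also have "B \<inter> t = t" using tu(2) by auto
    finally show "(\<Sum>b\<in>B. a b * b x) = (\<Sum>v\<in>t. u v * v x)" .
  qed
  hence "l2norm M (\<lambda>x. \<Sum>b\<in>B. a b * b x) = 0" using z l2norm_zero_fun by simp
  hence "a v = 0" using assms(2) tu unfolding indepL2_def by blast
  then show False using tu unfolding a_def by simp
qed

context pxs
begin

definition Tset :: "(nat \<Rightarrow> nat) \<Rightarrow> nat set \<Rightarrow> (pt \<Rightarrow> real) set" where
  "Tset m J = (\<lambda>(j,k). (\<lambda>x. trig k (x j))) ` (SIGMA j:J. {1..m j})"

lemma VJ_span:
  assumes "finite J" "g \<in> VJ PX q m J"
  shows "g \<in> fv.span (Tset m J)"
proof -
  obtain gs where gs: "\<forall>j\<in>J. gs j \<in> Vj PX q j (m j)" "g = (\<lambda>x. \<Sum>j\<in>J. gs j x)"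
    using assms(2) unfolding VJ_def by blast
  have "gs j \<in> fv.span (Tset m J)" if j: "j \<in> J" for j
  proof -
    obtain a where a: "gs j = (\<lambda>x. \<Sum>k=1..m j. a k * trig k (x j))"
      using gs(1) j unfolding Vj_def by blast
    have "gs j = (\<Sum>k\<in>{1..m j}. (\<lambda>x. a k * trig k (x j)))" unfolding a fun_sum by simp
    also have "\<dots> \<in> fv.span (Tset m J)"
    proof (rule fv.span_sum)
      fix k assume k: "k \<in> {1..m j}"
      have "(\<lambda>x. trig k (x j)) \<in> Tset m J" unfolding Tset_def by (rule image_eqI[where x="(j,k)"]) (use j k in auto)
      hence "(\<lambda>x. trig k (x j)) \<in> fv.span (Tset m J)" by (rule fv.span_base)
      from fv.span_scale[OF this, of "a k"] show "(\<lambda>x. a k * trig k (x j)) \<in> fv.span (Tset m J)" .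
    qed
    finally show ?thesis .
  qed
  hence "(\<Sum>j\<in>J. gs j) \<in> fv.span (Tset m J)" by (intro fv.span_sum)
  moreover have "(\<Sum>j\<in>J. gs j) = g" unfolding gs(2) fun_sum by simp
  ultimately show ?thesis by simp
qed

lemma dim_upper:
  assumes "finite J" "finite B" "B \<subseteq> VJ PX q m J" "indepL2 PX B"
  shows "card B \<le> card (Tset m J)"
proof -
  have fT: "finite (Tset m J)" unfolding Tset_def using assms(1) by auto
  have sub: "B \<subseteq> fv.span (Tset m J)" using VJ_span[OF assms(1)] assms(3) by blast
  show ?thesis using fv.independent_span_bound[OF fT indepL2_fv[OF assms(2,4)] sub] by simp
qed

lemma dimL2_ge:
  assumes "finite J" "finite B" "B \<subseteq> VJ PX q m J" "indepL2 PX B"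
  shows "card B \<le> dimL2 PX (VJ PX q m J)"
proof -
  define S where "S = {card B | B. finite B \<and> B \<subseteq> VJ PX q m J \<and>
      (\<forall>a. l2norm PX (\<lambda>x. \<Sum>b\<in>B. a b * b x) = 0 \<longrightarrow> (\<forall>b\<in>B. a b = 0))}"
  have SS: "S = {card B | B. finite B \<and> B \<subseteq> VJ PX q m J \<and> indepL2 PX B}"
    unfolding S_def indepL2_def by simp
  have "bdd_above S"
  proof (rule bdd_aboveI[of _ "card (Tset m J)"])
    fix x assume "x \<in> S"
    then obtain B' where B': "x = card B'" "finite B'" "B' \<subseteq> VJ PX q m J" "indepL2 PX B'"
      unfolding SS by auto
    show "x \<le> card (Tset m J)" unfolding B'(1) by (rule dim_upper[OF assms(1) B'(2-4)])
  qed
  moreover have "card B \<in> S" unfolding SS using assms(2-4) by auto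
  ultimately have "card B \<le> Sup S" using cSup_upper by blast
  moreover have "dimL2 PX (VJ PX q m J) = Sup S" unfolding dimL2_def S_def by simp
  ultimately show ?thesis by simp
qed

end



lemma ifmult: "(if c then 1 else 0) * (y::real) = (if c then y else 0)" by simp

context pxs
begin

lemma Ks_fin: "finite (Ks j mm)" unfolding Ks_def by simp
lemma Ks_ge1: "k \<in> Ks j mm \<Longrightarrow> k \<ge> 1" unfolding Ks_def by (auto split: if_splits)

lemma wb_in_Vj:
  assumes "j \<in> {1..q}" "1 \<le> mm" "k \<in> Ks j mm"
  shows "wb j k \<in> Vj PX q j mm"
proof -
  have "(\<lambda>x. \<Sum>k'\<in>Ks j mm. (if k' = k then 1 else 0) * wb j k' x) \<in> Vj PX q j mm"
    by (rule Vj_char_b[OF assms(1,2)])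
  moreover have "(\<lambda>x. \<Sum>k'\<in>Ks j mm. (if k' = k then 1 else 0) * wb j k' x) = wb j k"
    using assms(3) Ks_fin by (simp add: ifmult)
  ultimately show ?thesis by simp
qed

lemma zero_in_Vj:
  assumes "j \<in> {1..q}" "1 \<le> mm"
  shows "(\<lambda>x. 0) \<in> Vj PX q j mm"
  using Vj_char_b[OF assms, of "\<lambda>_. 0"] by simp

lemma dim_lower:
  fixes qs :: nat and m :: "nat \<Rightarrow> nat" and pp :: "nat \<Rightarrow> real \<Rightarrow> real" and J0 J :: "nat set"
  assumes rho1: "rho PX q qs < 1"
    and J0J: "J0 \<subseteq> J" and J: "J \<subseteq> {1..q}" and cJ0: "card J0 \<le> qs"
    and m1: "\<forall>j\<in>J. m j \<ge> 1"
    and dist: "\<forall>j\<in>J0. distributed PX lborel (\<lambda>x. x j) (\<lambda>t. ennreal (pp j t))"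
    and ppos: "\<forall>j\<in>J0. \<forall>t\<in>{0..1}. pp j t > 0"
  shows "(\<Sum>j\<in>J0. card (Ks j (m j))) \<le> dimL2 PX (VJ PX q m J)"
proof -
  have finJ: "finite J" using J finite_subset by blast
  have finJ0: "finite J0" using J0J finJ finite_subset by blast
  have J0q: "J0 \<subseteq> {1..q}" using J0J J by blast
  define I where "I = (SIGMA j:J0. Ks j (m j))"
  define e where "e = (\<lambda>i. wb (fst i) (snd i))"
  have finI: "finite I" unfolding I_def using finJ0 Ks_fin by auto
  have idx: "\<forall>i\<in>I. a i = 0" if ae: "AE x in PX. (\<Sum>i\<in>I. a i * e i x) = 0" for a
  proof
    fix i assume "i \<in> I"
    then obtain j l where i: "i = (j,l)" "j \<in> J0" "l \<in> Ks j (m j)" unfolding I_def by blast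
    define G where "G = (\<lambda>j'. (\<lambda>x. \<Sum>k\<in>Ks j' (m j'). a (j',k) * wb j' k x))"
    have GH: "\<forall>j'\<in>J0. G j' \<in> Hj PX q j'"
    proof
      fix j' assume j': "j' \<in> J0"
      have "G j' \<in> Vj PX q j' (m j')" unfolding G_def
        by (rule Vj_char_b) (use j' J0q m1 J0J in auto)
      then show "G j' \<in> Hj PX q j'" using Vj_Hj by blast
    qed
    have sumeq: "(\<Sum>i\<in>I. a i * e i x) = (\<Sum>j'\<in>J0. G j' x)" for x
    proof -
      have "(\<Sum>i\<in>I. a i * e i x) = (\<Sum>(j',k)\<in>I. a (j',k) * wb j' k x)"
        unfolding e_def by (rule sum.cong) auto
      also have "\<dots> = (\<Sum>j'\<in>J0. \<Sum>k\<in>Ks j' (m j'). a (j',k) * wb j' k x)"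
        unfolding I_def by (rule sum.Sigma[symmetric]) (use finJ0 Ks_fin in auto)
      finally show ?thesis unfolding G_def by simp
    qed
    have AE0: "AE x in PX. (\<Sum>j'\<in>J0. G j' x) = 0" using ae by eventually_elim (simp add: sumeq)
    have n0: "l2norm PX (G j) = 0" by (rule rho_indep[OF rho1 J0q cJ0 GH AE0 i(2)])
    have jq: "j \<in> {1..q}" using i(2) J0q by blast
    have LG: "L2 PX (G j)" using Hj_L2 GH i(2) jq by blast
    have aeG: "AE x in PX. G j x = 0" by (rule l2norm_zero_AE[OF LG n0])
    define C where "C = (if j < q then (\<Sum>k\<in>Ks j (m j). a (j,k) * cE j k) else 0)"
    define Q where "Q = (\<lambda>t. (\<Sum>k\<in>Ks j (m j). a (j,k) * trig k t) - C)"
    have GQ: "G j x = Q (x j)" for x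
    proof (cases "j < q")
      case True
      then show ?thesis unfolding G_def Q_def C_def wb_def
        by (simp add: right_diff_distrib sum_subtractf)
    next
      case False
      then show ?thesis unfolding G_def Q_def C_def wb_def by simp
    qed
    have Qm: "Q \<in> borel_measurable borel" unfolding Q_def by measurable
    have aeQ: "AE x in PX. Q (x j) = 0" using aeG by eventually_elim (simp add: GQ)
    have leb: "AE t in lborel. t \<in> {0..1} \<longrightarrow> Q t = 0"
      by (rule ae_to_leb[OF jq _ _ Qm aeQ]) (use dist ppos i(2) in auto)
    have "a (j,l) = 0"
    proof (rule poly_zero[OF Ks_fin _ _ i(3)])
      show "\<forall>k\<in>Ks j (m j). 1 \<le> k" using Ks_ge1 by blast
      show "C = 0 \<or> 1 \<notin> Ks j (m j)" unfolding C_def Ks_def by auto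
      show "AE t in lborel. t \<in> {0..1} \<longrightarrow> (\<Sum>k\<in>Ks j (m j). a (j, k) * trig k t) - C = 0"
        using leb unfolding Q_def .
    qed
    then show "a i = 0" using i by simp
  qed
  have inj: "inj_on e I"
  proof (rule inj_onI, rule ccontr)
    fix i1 i2 assume i12: "i1 \<in> I" "i2 \<in> I" "e i1 = e i2" "i1 \<noteq> i2"
    define a where "a = (\<lambda>i. (if i = i1 then 1 else 0) - (if i = i2 then (1::real) else 0))"
    have "(\<Sum>i\<in>I. a i * e i x) = e i1 x - e i2 x" for x
      unfolding a_def left_diff_distrib ifmult sum_subtractf using finI i12(1,2) by simp
    hence "AE x in PX. (\<Sum>i\<in>I. a i * e i x) = 0" using i12(3) by simp
    hence "a i1 = 0" using idx i12(1) by blast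
    then show False using i12(4) unfolding a_def by simp
  qed
  have sub: "e ` I \<subseteq> VJ PX q m J"
  proof
    fix g assume "g \<in> e ` I"
    then obtain j k where jk: "g = wb j k" "j \<in> J0" "k \<in> Ks j (m j)" unfolding I_def e_def by auto
    define gs where "gs = (\<lambda>j'. if j' = j then wb j k else (\<lambda>x. 0))"
    have "\<forall>j'\<in>J. gs j' \<in> Vj PX q j' (m j')"
    proof
      fix j' assume j': "j' \<in> J"
      show "gs j' \<in> Vj PX q j' (m j')"
      proof (cases "j' = j")
        case True then show ?thesis unfolding gs_def using wb_in_Vj jk j' J m1 by auto
      next
        case False then show ?thesis unfolding gs_def using zero_in_Vj j' J m1 by auto
      qed
    qed
    moreover have "g = (\<lambda>x. \<Sum>j'\<in>J. gs j' x)"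
    proof (rule ext)
      fix x
      have "(\<Sum>j'\<in>J. gs j' x) = (\<Sum>j'\<in>J. if j' = j then wb j k x else 0)"
        unfolding gs_def by (rule sum.cong) auto
      also have "\<dots> = wb j k x" using finJ jk(2) J0J by auto
      finally show "g x = (\<Sum>j'\<in>J. gs j' x)" using jk(1) by simp
    qed
    ultimately show "g \<in> VJ PX q m J" unfolding VJ_def by blast
  qed
  have ind: "indepL2 PX (e ` I)"
    unfolding indepL2_def
  proof (intro allI impI)
    fix a assume n0: "l2norm PX (\<lambda>x. \<Sum>b\<in>e ` I. a b * b x) = 0"
    have re: "(\<lambda>x. \<Sum>b\<in>e ` I. a b * b x) = (\<lambda>x. \<Sum>i\<in>I. (a \<circ> e) i * e i x)"
    proof (rule ext)
      fix x show "(\<Sum>b\<in>e ` I. a b * b x) = (\<Sum>i\<in>I. (a \<circ> e) i * e i x)"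
        using sum.reindex[OF inj, of "\<lambda>b. a b * b x"] by (simp add: comp_def)
    qed
    have L: "L2 PX (\<lambda>x. \<Sum>i\<in>I. (a \<circ> e) i * e i x)"
    proof (rule L2_sum[OF finI])
      fix i assume "i \<in> I"
      then show "L2 PX (e i)" unfolding e_def I_def using wb_L2 J0q by auto
    qed
    have "AE x in PX. (\<Sum>i\<in>I. (a \<circ> e) i * e i x) = 0"
      by (rule l2norm_zero_AE[OF L]) (use n0 re in simp)
    hence "\<forall>i\<in>I. (a \<circ> e) i = 0" by (rule idx)
    then show "\<forall>b\<in>e ` I. a b = 0" by auto
  qed
  have "card (e ` I) \<le> dimL2 PX (VJ PX q m J)"
    by (rule dimL2_ge[OF finJ _ sub ind]) (use finI in simp)
  moreover have "card (e ` I) = (\<Sum>j\<in>J0. card (Ks j (m j)))"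
    using card_image[OF inj] finJ0 Ks_fin unfolding I_def by simp
  ultimately show ?thesis by simp
qed

end



lemma exp_chord:
  assumes "0 \<le> t" "t \<le> (1::real)"
  shows "exp (t * ln 2) \<le> 1 + t"
proof -
  have "(\<lambda>x. exp (1 * x)) ((1 - t) *\<^sub>R 0 + t *\<^sub>R ln 2) \<le> (1 - t) * (\<lambda>x. exp (1 * x)) 0 + t * (\<lambda>x. exp (1 * x)) (ln 2)"
    by (rule convex_onD[OF convex_on_exp]) (use assms in auto)
  then show ?thesis by (simp add: algebra_simps)
qed

lemma chernoff_prod:
  fixes PX :: "'a measure" and Z :: "'a \<Rightarrow> real"
  assumes P: "prob_space PX" and Zm: "Z \<in> borel_measurable PX"
    and Zb: "\<forall>x\<in>space PX. 0 \<le> Z x \<and> Z x \<le> b" and b: "b > 0"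
    and EZ: "(\<integral>x. Z x \<partial>PX) \<le> T"
  shows "measure (PiM {..<n} (\<lambda>_. PX)) {xs \<in> space (PiM {..<n} (\<lambda>_. PX)). 2 * T * real n \<le> (\<Sum>i<n. Z (xs i))}
     \<le> exp (- real n * T * (2 * ln 2 - 1) / b)"
proof -
  interpret ps: product_sigma_finite "\<lambda>_. PX"
    unfolding product_sigma_finite_def using P prob_space_imp_sigma_finite by blast
  define M where "M = PiM {..<n} (\<lambda>_. PX)"
  interpret pp: prob_space M unfolding M_def by (rule prob_space_PiM) (use P in auto)
  define l where "l = ln 2 / b"
  have l: "l > 0" unfolding l_def using b by simp
  define S where "S = (\<lambda>xs. \<Sum>i<n. Z (xs i))"
  have Sm[measurable]: "S \<in> borel_measurable M" unfolding S_def M_def using Zm by measurable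
  define a where "a = 2 * T * real n"
  have "emeasure M {xs \<in> space M. a \<le> S xs} \<le>
      ennreal (exp (-l * a)) * (\<integral>\<^sup>+xs. ennreal (exp (l * S xs)) * indicator (space M) xs \<partial>M)"
    by (rule Chernoff_ineq_nn_integral_ge[OF l]) auto
  also have "(\<integral>\<^sup>+xs. ennreal (exp (l * S xs)) * indicator (space M) xs \<partial>M) =
      (\<integral>\<^sup>+xs. (\<Prod>i\<in>{..<n}. ennreal (exp (l * Z (xs i)))) \<partial>M)"
    by (intro nn_integral_cong)
       (simp add: S_def sum_distrib_left exp_sum prod_ennreal)
  also have "\<dots> = (\<Prod>i\<in>{..<n}. \<integral>\<^sup>+x. ennreal (exp (l * Z x)) \<partial>PX)"
    unfolding M_def by (rule ps.product_nn_integral_prod) (use Zm in auto)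
  also have "\<dots> \<le> (\<Prod>i\<in>{..<n}. ennreal (exp (T / b)))"
  proof (rule prod_mono_ennreal)
    fix i
    have intZ: "integrable PX Z"
      by (rule Bochner_Integration.integrable_bound[where f="\<lambda>_. b"])
         (use P Zm Zb in \<open>auto simp: prob_space_def finite_measure.integrable_const intro!: AE_I2\<close>)
    have "(\<integral>\<^sup>+x. ennreal (exp (l * Z x)) \<partial>PX) \<le> (\<integral>\<^sup>+x. ennreal (1 + Z x / b) \<partial>PX)"
    proof (rule nn_integral_mono)
      fix x assume x: "x \<in> space PX"
      have "exp (l * Z x) = exp ((Z x / b) * ln 2)" unfolding l_def by (simp add: field_simps)
      also have "\<dots> \<le> 1 + Z x / b" by (rule exp_chord) (use Zb x b in auto)
      finally show "ennreal (exp (l * Z x)) \<le> ennreal (1 + Z x / b)" by (rule ennreal_leI)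
    qed
    also have "\<dots> = ennreal (\<integral>x. 1 + Z x / b \<partial>PX)"
      by (rule nn_integral_eq_integral) (use intZ P Zb b in \<open>auto simp: prob_space_def finite_measure.integrable_const intro!: AE_I2\<close>)
    also have "(\<integral>x. 1 + Z x / b \<partial>PX) = (\<integral>x. 1 \<partial>PX) + (\<integral>x. Z x / b \<partial>PX)"
      by (rule Bochner_Integration.integral_add) (use intZ P in \<open>auto simp: prob_space_def finite_measure.integrable_const\<close>)
    also have "\<dots> = 1 + (\<integral>x. Z x \<partial>PX) / b"
      using P by (simp add: prob_space.prob_space)
    also have "ennreal (1 + (\<integral>x. Z x \<partial>PX) / b) \<le> ennreal (exp (T / b))"
    proof (rule ennreal_leI)
      have "1 + (\<integral>x. Z x \<partial>PX) / b \<le> 1 + T / b" using EZ b by (simp add: divide_right_mono)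
      also have "\<dots> \<le> exp (T / b)" by (rule exp_ge_add_one_self[of "T/b", unfolded add.commute[of "T/b"]])
      finally show "1 + (\<integral>x. Z x \<partial>PX) / b \<le> exp (T / b)" .
    qed
    finally show "(\<integral>\<^sup>+x. ennreal (exp (l * Z x)) \<partial>PX) \<le> ennreal (exp (T / b))" .
  qed
  also have "(\<Prod>i\<in>{..<n}. ennreal (exp (T / b))) = ennreal (exp (T / b) ^ n)"
    by (simp add: ennreal_power)
  finally have "emeasure M {xs \<in> space M. a \<le> S xs} \<le> ennreal (exp (-l * a)) * ennreal (exp (T / b) ^ n)"
    by (simp add: mult_left_mono)
  also have "\<dots> = ennreal (exp (-l * a) * exp (T / b) ^ n)" by (simp add: ennreal_mult)
  also have "exp (-l * a) * exp (T / b) ^ n = exp (- real n * T * (2 * ln 2 - 1) / b)"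
    unfolding l_def a_def using b by (simp add: exp_of_nat_mult[symmetric] mult_exp_exp field_simps)
  finally have "emeasure M {xs \<in> space M. a \<le> S xs} \<le> ennreal (exp (- real n * T * (2 * ln 2 - 1) / b))" .
  then show ?thesis unfolding M_def[symmetric] a_def[symmetric]
    by (simp add: pp.emeasure_eq_measure S_def)
qed



theorem lemma4:
  fixes PX :: "pt measure" and q qs n :: nat
    and f p :: "nat \<Rightarrow> real \<Rightarrow> real"
    and c c' eps' :: real and \<alpha> K C :: "nat \<Rightarrow> real" and m :: "nat \<Rightarrow> nat"
  assumes PX: "prob_space PX" "sets PX = sets (PiM {1..q} (\<lambda>_. borel))"
    and q: "q \<ge> 1"
    and f_meas: "\<forall>j\<in>{1..q}. f j \<in> borel_measurable borel"
    and f_L2: "\<forall>j\<in>{1..q}. integrable PX (\<lambda>x. (f j (x j))\<^sup>2)"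
    and f_centered: "\<forall>j\<in>{1..q}. j < q \<longrightarrow> (\<integral>x. f j (x j) \<partial>PX) = 0"
    and qs: "card (J0 PX q f) \<le> qs" "qs \<le> q"
    and A1: "rho PX q qs < 1"
    and eps': "eps' > 0"
      "\<forall>J g. J \<subseteq> {1..q} \<and> card J \<le> qs \<and> (\<forall>j\<in>J. g j \<in> Hj PX q j) \<longrightarrow>
         (l2norm PX (\<lambda>x. \<Sum>j\<in>J. g j x))\<^sup>2 \<le> (1 + eps') * (\<Sum>j\<in>J. (l2norm PX (g j))\<^sup>2)"
    and A2_c: "c > 0"
    and A2_dens: "\<forall>j\<in>{1..q}. distributed PX lborel (\<lambda>x. x j) (\<lambda>t. ennreal (p j t))"
    and A2_range: "\<forall>j\<in>{1..q}. AE x in PX. x j \<in> {0..1}"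
    and A2_bounds: "\<forall>j\<in>{1..q}. \<forall>t\<in>{0..1}. c \<le> p j t \<and> p j t \<le> 1 / c"
    and A2_smooth: "\<forall>j\<in>{1..q}. \<alpha> j > 1/2 \<and> K j > 0 \<and> f j \<in> sobolev_ball (\<alpha> j) (K j)"
    and J0_ne: "J0 PX q f \<noteq> {}"
    and c': "0 < c'" "c' < 1"
    and C: "\<forall>j\<in>{1..q}. C j > 0 \<and>
       (\<forall>h mm. h \<in> sobolev_ball (\<alpha> j) (K j) \<and> (\<lambda>x. h (x j)) \<in> Hj PX q j \<and> mm \<ge> 1 \<longrightarrow>
          (l2norm PX (\<lambda>x. h (x j) - projV PX q j mm (\<lambda>x. h (x j)) x))\<^sup>2
              \<le> C j * (K j)\<^sup>2 * real mm powr (- 2 * \<alpha> j) \<and>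
          (AE x in PX. (h (x j) - projV PX q j mm (\<lambda>x. h (x j)) x)\<^sup>2
              \<le> C j * (K j)\<^sup>2 * real mm powr (1 - 2 * \<alpha> j)))"
    and L: "\<forall>j\<in>{1..q}. m j \<ge> 1 \<and>
       real (m j) \<ge> (C j * (K j)\<^sup>2 * real qs * (1 + eps') /
                      (c' * (1 - (rho PX q qs)\<^sup>2) * kappa PX q f)) powr (1 / (2 * \<alpha> j))"
  shows "measure (PiM {..<n} (\<lambda>_. PX))
     {xs \<in> space (PiM {..<n} (\<lambda>_. PX)).
        \<not> ((1 / real n) * (\<Sum>i<n. ((\<Sum>j\<in>{1..q}. f j (xs i j))
              - (\<Sum>j\<in>J0 PX q f. projV PX q j (m j) (\<lambda>x. f j (x j)) (xs i)))\<^sup>2)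
           \<le> 2 * c' * (1 - (rho PX q qs)\<^sup>2) * kappa PX q f)}
   \<le> exp (- (3 / 16) * (real n / real (dmax PX q m qs)))"
proof -
  interpret pxs PX q by (rule pxs.intro[OF PX(1) PX(2)])
  define JJ where "JJ = J0 PX q f"
  define \<rho> where "\<rho> = rho PX q qs"
  define \<kappa> where "\<kappa> = kappa PX q f"
  define T where "T = c' * (1 - \<rho>\<^sup>2) * \<kappa>"
  define s where "s = card JJ"
  have JJq: "JJ \<subseteq> {1..q}" unfolding JJ_def J0_def by auto
  have finJJ: "finite JJ" using JJq finite_subset by blast
  have JJne: "JJ \<noteq> {}" using J0_ne unfolding JJ_def .
  have s1: "1 \<le> s" unfolding s_def using finJJ JJne by (simp add: Suc_le_eq card_gt_0_iff)
  have sqs: "s \<le> qs" using qs(1) unfolding s_def JJ_def .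
  have qs1: "1 \<le> qs" using s1 sqs by simp
  have fm': "\<And>j. j \<in> {1..q} \<Longrightarrow> (\<lambda>x. f j (x j)) \<in> borel_measurable PX"
    using f_meas comp_meas by blast
  have fL2: "\<And>j. j \<in> {1..q} \<Longrightarrow> L2 PX (\<lambda>x. f j (x j))"
    using f_L2 fm' unfolding L2_def by blast
  have fH: "\<And>j. j \<in> {1..q} \<Longrightarrow> (\<lambda>x. f j (x j)) \<in> Hj PX q j"
    unfolding Hj_def using f_meas f_L2 f_centered by blast
  have JJpos: "\<And>j. j \<in> JJ \<Longrightarrow> l2norm PX (\<lambda>x. f j (x j)) > 0" unfolding JJ_def J0_def by auto
  have rho0: "0 \<le> \<rho>" unfolding \<rho>_def by (rule rho_nonneg)
  have rho1: "\<rho> < 1" unfolding \<rho>_def by (rule A1)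
  have "\<rho> * \<rho> \<le> \<rho> * 1" by (rule mult_left_mono) (use rho0 rho1 in auto)
  hence omr: "0 < 1 - \<rho>\<^sup>2" "1 - \<rho>\<^sup>2 \<le> 1" using rho1 by (auto simp: power2_eq_square)
  define KS where "KS = {(l2norm PX (\<lambda>x. \<Sum>j\<in>J. f j (x j)))\<^sup>2 | J. J \<subseteq> JJ \<and> J \<noteq> {}}"
  have kdef: "\<kappa> = Min KS" unfolding \<kappa>_def kappa_def KS_def JJ_def ..
  have KSim: "KS = (\<lambda>J. (l2norm PX (\<lambda>x. \<Sum>j\<in>J. f j (x j)))\<^sup>2) ` {J. J \<subseteq> JJ \<and> J \<noteq> {}}"
    unfolding KS_def by blast
  have finKS: "finite KS" unfolding KSim
    by (rule finite_imageI, rule finite_subset[of _ "Pow JJ"]) (use finJJ in auto)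
  have KSne: "KS \<noteq> {}" unfolding KSim using JJne by blast
  have KSpos: "\<forall>v\<in>KS. 0 < v"
  proof
    fix v assume "v \<in> KS"
    then obtain J where J: "J \<subseteq> JJ" "J \<noteq> {}" "v = (l2norm PX (\<lambda>x. \<Sum>j\<in>J. f j (x j)))\<^sup>2"
      unfolding KSim by blast
    have Jq: "J \<subseteq> {1..q}" using J JJq by blast
    have finJ: "finite J" using J finJJ finite_subset by blast
    show "0 < v"
    proof (rule ccontr)
      assume "\<not> 0 < v"
      hence n0: "l2norm PX (\<lambda>x. \<Sum>j\<in>J. f j (x j)) = 0" using J(3) by simp
      have L: "L2 PX (\<lambda>x. \<Sum>j\<in>J. f j (x j))"
        by (rule L2_sum_gen[OF finJ]) (use fL2 Jq in auto)
      have ae: "AE x in PX. (\<Sum>j\<in>J. f j (x j)) = 0" by (rule l2norm_zero_AE[OF L n0])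
      have cJ: "card J \<le> qs" using card_mono[OF finJJ J(1)] sqs unfolding s_def by simp
      obtain j where j: "j \<in> J" using J(2) by blast
      have GH: "\<forall>j\<in>J. (\<lambda>x. f j (x j)) \<in> Hj PX q j" using fH Jq by blast
      have "l2norm PX (\<lambda>x. f j (x j)) = 0"
        using rho_indep[where G="\<lambda>j x. f j (x j)", OF A1 Jq cJ GH ae j] .
      then show False using JJpos j J(1) by force
    qed
  qed
  have kpos: "0 < \<kappa>" unfolding kdef using finKS KSne KSpos by simp
  have kle: "\<And>j. j \<in> JJ \<Longrightarrow> \<kappa> \<le> (l2norm PX (\<lambda>x. f j (x j)))\<^sup>2"
  proof -
    fix j assume j: "j \<in> JJ"
    have "(l2norm PX (\<lambda>x. \<Sum>j'\<in>{j}. f j' (x j')))\<^sup>2 \<in> KS" unfolding KSim using j by blast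
    then show "\<kappa> \<le> (l2norm PX (\<lambda>x. f j (x j)))\<^sup>2" unfolding kdef using finKS by simp
  qed
  have Tpos: "0 < T" unfolding T_def using c' omr kpos by simp
  have Tk: "T < \<kappa>"
  proof -
    have a: "c' * (1 - \<rho>\<^sup>2) \<le> c' * 1" by (rule mult_left_mono) (use omr c' in auto)
    have "c' * (1 - \<rho>\<^sup>2) < 1" using a c'(2) by linarith
    then show ?thesis unfolding T_def using kpos by simp
  qed
  define R where "R = (\<lambda>j x. f j (x j) - projV PX q j (m j) (\<lambda>x. f j (x j)) x)"
  define U where "U = T / (real qs * (1 + eps'))"
  have Upos: "0 < U" unfolding U_def using Tpos qs1 eps' by simp
  have Y1: "1 * 1 \<le> real qs * (1 + eps')" by (rule mult_mono) (use qs1 eps' in auto)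
  have "T / (real qs * (1 + eps')) \<le> T / 1" by (rule divide_left_mono) (use Tpos Y1 in auto)
  hence UT: "U \<le> T" unfolding U_def by simp
  have projin: "\<And>j. j \<in> {1..q} \<Longrightarrow> projV PX q j (m j) (\<lambda>x. f j (x j)) \<in> Vj PX q j (m j)"
    using projV_in fL2 L by blast
  have RH: "\<And>j. j \<in> {1..q} \<Longrightarrow> R j \<in> Hj PX q j"
    unfolding R_def using Hj_diff fH projin Vj_Hj by blast
  have Rb: "(l2norm PX (R j))\<^sup>2 \<le> U \<and> (AE x in PX. (R j x)\<^sup>2 \<le> real (m j) * U)" if j: "j \<in> JJ" for j
  proof -
    have jq: "j \<in> {1..q}" using j JJq by blast
    have Cj: "C j > 0" and al: "\<alpha> j > 1/2" and Kj: "K j > 0" and sob: "f j \<in> sobolev_ball (\<alpha> j) (K j)"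
      using C A2_smooth jq by auto
    have m1: "1 \<le> m j" using L jq by blast
    define X where "X = C j * (K j)\<^sup>2 * real qs * (1 + eps') / T"
    have Xpos: "0 < X" unfolding X_def using Cj Kj qs1 eps' Tpos by simp
    have mX: "X powr (1 / (2 * \<alpha> j)) \<le> real (m j)"
      using conjunct2[OF bspec[OF L jq]] unfolding X_def T_def \<rho>_def \<kappa>_def by simp
    have "(X powr (1 / (2 * \<alpha> j))) powr (2 * \<alpha> j) \<le> real (m j) powr (2 * \<alpha> j)"
      by (rule powr_mono2) (use al mX in auto)
    also have "(X powr (1 / (2 * \<alpha> j))) powr (2 * \<alpha> j) = X"
      using al Xpos by (simp add: powr_powr)
    finally have Xm: "X \<le> real (m j) powr (2 * \<alpha> j)" .
    define \<beta> where "\<beta> = C j * (K j)\<^sup>2 * real (m j) powr (- 2 * \<alpha> j)"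
    have mpos: "0 < real (m j)" using m1 by simp
    have "\<beta> = C j * (K j)\<^sup>2 / real (m j) powr (2 * \<alpha> j)"
      unfolding \<beta>_def using mpos by (simp add: powr_minus divide_inverse)
    also have "\<dots> \<le> C j * (K j)\<^sup>2 / X"
      by (rule divide_left_mono) (use Xm Cj Kj Xpos mpos in \<open>auto intro!: mult_pos_pos\<close>)
    also have "\<dots> = U"
    proof -
      have Qp: "0 < C j * (K j)\<^sup>2" using Cj Kj by simp
      have Yp: "0 < real qs * (1 + eps')" using qs1 eps'(1) by simp
      have XQ: "X = (C j * (K j)\<^sup>2) * (real qs * (1 + eps')) / T" unfolding X_def by (simp add: mult.assoc)
      have "C j * (K j)\<^sup>2 / X = (C j * (K j)\<^sup>2) * T / ((C j * (K j)\<^sup>2) * (real qs * (1 + eps')))"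
        unfolding XQ by (simp only: divide_divide_eq_right)
      also have "\<dots> = T / (real qs * (1 + eps'))"
        by (rule mult_divide_mult_cancel_left) (use Cj Kj in simp)
      finally show ?thesis unfolding U_def .
    qed
    finally have bU: "\<beta> \<le> U" .
    have pw: "C j * (K j)\<^sup>2 * real (m j) powr (1 - 2 * \<alpha> j) = real (m j) * \<beta>"
    proof -
      have "real (m j) * real (m j) powr (- 2 * \<alpha> j) = real (m j) powr 1 * real (m j) powr (- 2 * \<alpha> j)"
        using mpos by simp
      also have "\<dots> = real (m j) powr (1 + (- 2 * \<alpha> j))" by (rule powr_add[symmetric])
      also have "\<dots> = real (m j) powr (1 - 2 * \<alpha> j)"
        by (rule arg_cong[where f="\<lambda>e. real (m j) powr e"]) simp
      finally have "real (m j) powr (1 - 2 * \<alpha> j) = real (m j) * real (m j) powr (- 2 * \<alpha> j)" by simp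
      then show ?thesis unfolding \<beta>_def by simp
    qed
    have CC: "(l2norm PX (\<lambda>x. f j (x j) - projV PX q j (m j) (\<lambda>x. f j (x j)) x))\<^sup>2 \<le> \<beta> \<and>
          (AE x in PX. (f j (x j) - projV PX q j (m j) (\<lambda>x. f j (x j)) x)\<^sup>2
              \<le> C j * (K j)\<^sup>2 * real (m j) powr (1 - 2 * \<alpha> j))"
      unfolding \<beta>_def by (rule conjunct2[OF bspec[OF C jq], rule_format]) (use sob fH[OF jq] m1 in blast)
    have ae1: "AE x in PX. (f j (x j) - projV PX q j (m j) (\<lambda>x. f j (x j)) x)\<^sup>2 \<le> real (m j) * \<beta>"
      using CC unfolding pw by blast
    have "(AE x in PX. (R j x)\<^sup>2 \<le> real (m j) * U)"
      using ae1
    proof eventually_elim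
      case (elim x)
      have "real (m j) * \<beta> \<le> real (m j) * U" by (rule mult_left_mono) (use bU in auto)
      then show ?case using elim unfolding R_def by simp
    qed
    moreover have "(l2norm PX (R j))\<^sup>2 \<le> U" using CC bU unfolding R_def by simp
    ultimately show ?thesis by blast
  qed
  have m2: "2 \<le> m j" if j: "j \<in> JJ" "j < q" for j
  proof (rule ccontr)
    assume "\<not> 2 \<le> m j"
    moreover have "1 \<le> m j" using L j JJq by blast
    ultimately have m1: "m j = 1" by simp
    have jq: "j \<in> {1..q}" using j JJq by blast
    obtain b where b: "projV PX q j (m j) (\<lambda>x. f j (x j)) = (\<lambda>x. \<Sum>k\<in>Ks j (m j). b k * wb j k x)"
      using Vj_char_a[OF jq _ projin[OF jq]] m1 by auto
    have "Ks j (m j) = {}" using m1 j unfolding Ks_def by simp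
    hence "R j = (\<lambda>x. f j (x j))" unfolding R_def b by simp
    hence "(l2norm PX (\<lambda>x. f j (x j)))\<^sup>2 \<le> U" using Rb[OF j(1)] by simp
    moreover have "\<kappa> \<le> (l2norm PX (\<lambda>x. f j (x j)))\<^sup>2" by (rule kle[OF j(1)])
    ultimately show False using UT Tk by simp
  qed
  define r where "r = (\<lambda>x. \<Sum>j\<in>JJ. R j x)"
  define Mm where "Mm = (\<Sum>j\<in>JJ. real (m j))"
  have RL2: "\<And>j. j \<in> JJ \<Longrightarrow> L2 PX (R j)" using RH Hj_L2 JJq by blast
  have rL2: "L2 PX r" unfolding r_def by (rule L2_sum_gen[OF finJJ RL2])
  have Er: "(\<integral>x. (r x)\<^sup>2 \<partial>PX) \<le> T"
  proof -
    have "(l2norm PX r)\<^sup>2 \<le> (1 + eps') * (\<Sum>j\<in>JJ. (l2norm PX (R j))\<^sup>2)"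
      unfolding r_def by (rule eps'(2)[rule_format]) (use JJq sqs RH in \<open>auto simp: s_def\<close>)
    also have "\<dots> \<le> (1 + eps') * (\<Sum>j\<in>JJ. U)"
      by (rule mult_left_mono, rule sum_mono) (use Rb eps' in auto)
    also have "\<dots> = real s * T / real qs" unfolding U_def s_def using eps' by simp
    also have "\<dots> \<le> T" using sqs qs1 Tpos by (simp add: divide_le_eq)
    finally have "(l2norm PX r)\<^sup>2 \<le> T" .
    moreover have "(l2norm PX r)\<^sup>2 = (\<integral>x. (r x)\<^sup>2 \<partial>PX)" unfolding l2norm_def by simp
    ultimately show ?thesis by simp
  qed
  have Mm1: "1 \<le> Mm"
  proof -
    obtain j where j: "j \<in> JJ" using JJne by blast
    have "real (m j) \<le> Mm" unfolding Mm_def by (rule member_le_sum) (use j finJJ in auto)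
    moreover have "1 \<le> m j" using L j JJq by blast
    ultimately show ?thesis by simp
  qed
  define b where "b = T * Mm"
  have bpos: "0 < b" unfolding b_def using Tpos Mm1 by simp
  have rb: "AE x in PX. (r x)\<^sup>2 \<le> b"
  proof -
    have "AE x in PX. \<forall>j\<in>JJ. (R j x)\<^sup>2 \<le> real (m j) * U"
      by (rule AE_finite_allI[OF finJJ]) (use Rb in blast)
    then show ?thesis
    proof eventually_elim
      case (elim x)
      have "(r x)\<^sup>2 \<le> (\<Sum>j\<in>JJ. (R j x)\<^sup>2) * real s"
        unfolding r_def s_def by (rule sum_squared_le_sum_of_squares)
      also have "\<dots> \<le> (\<Sum>j\<in>JJ. real (m j) * U) * real s"
        by (rule mult_right_mono, rule sum_mono) (use elim in auto)
      also have "\<dots> = Mm * T * (real s / (real qs * (1 + eps')))"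
        unfolding Mm_def U_def by (simp add: sum_distrib_right sum_divide_distrib)
      also have "\<dots> \<le> Mm * T * 1"
      proof (rule mult_left_mono)
        have "real s \<le> real qs * 1" using sqs by simp
        also have "\<dots> \<le> real qs * (1 + eps')" by (rule mult_left_mono) (use eps' in auto)
        finally show "real s / (real qs * (1 + eps')) \<le> 1" using qs1 eps' by simp
      qed (use Mm1 Tpos in auto)
      finally show ?case unfolding b_def by (simp add: mult.commute)
    qed
  qed
  define D where "D = (\<lambda>x. (\<Sum>j\<in>{1..q}. f j (x j)) - (\<Sum>j\<in>JJ. projV PX q j (m j) (\<lambda>x. f j (x j)) x))"
  have Dr: "AE x in PX. D x = r x"
  proof -
    have "AE x in PX. \<forall>j\<in>{1..q} - JJ. f j (x j) = 0"
    proof (rule AE_finite_allI)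
      fix j assume j: "j \<in> {1..q} - JJ"
      have "l2norm PX (\<lambda>x. f j (x j)) = 0"
        using j l2norm_nonneg[of "\<lambda>x. f j (x j)"] unfolding JJ_def J0_def by auto
      then show "AE x in PX. f j (x j) = 0" using l2norm_zero_AE fL2 j by blast
    qed simp
    then show ?thesis
    proof eventually_elim
      case (elim x)
      have "(\<Sum>j\<in>{1..q}. f j (x j)) = (\<Sum>j\<in>{1..q} - JJ. f j (x j)) + (\<Sum>j\<in>JJ. f j (x j))"
        by (rule sum.subset_diff[OF JJq]) simp
      also have "(\<Sum>j\<in>{1..q} - JJ. f j (x j)) = 0" using elim by simp
      finally show ?case unfolding D_def r_def R_def by (simp add: sum_subtractf)
    qed
  qed
  have Dm: "D \<in> borel_measurable PX"
  proof -
    have "\<And>j. j \<in> JJ \<Longrightarrow> projV PX q j (m j) (\<lambda>x. f j (x j)) \<in> borel_measurable PX"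
      using projin Vj_Hj Hj_L2 JJq unfolding L2_def by blast
    then show ?thesis unfolding D_def using fm' by (intro borel_measurable_diff borel_measurable_sum) auto
  qed
  define dl where "dl = (\<Sum>j\<in>JJ. card (Ks j (m j)))"
  have Mdl: "Mm \<le> 2 * real dl"
  proof -
    have "Mm \<le> (\<Sum>j\<in>JJ. 2 * real (card (Ks j (m j))))" unfolding Mm_def
    proof (rule sum_mono)
      fix j assume j: "j \<in> JJ"
      show "real (m j) \<le> 2 * real (card (Ks j (m j)))"
      proof (cases "j < q")
        case True then show ?thesis using m2[OF j True] unfolding Ks_def by simp
      next
        case False then show ?thesis unfolding Ks_def by simp
      qed
    qed
    then show ?thesis unfolding dl_def by (simp add: sum_distrib_left)
  qed
  obtain S where S: "S \<subseteq> {1..q} - JJ" "card S = qs - s" "finite S"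
  proof (rule obtain_subset_with_card_n)
    show "qs - s \<le> card ({1..q} - JJ)" using qs(2) JJq finJJ unfolding s_def by (simp add: card_Diff_subset)
  qed
  define JS where "JS = JJ \<union> S"
  have JSq: "JS \<subseteq> {1..q}" unfolding JS_def using JJq S by auto
  have cJS: "card JS = qs" unfolding JS_def using S finJJ sqs unfolding s_def
    by (subst card_Un_disjoint) auto
  have dlJS: "dl \<le> dimL2 PX (VJ PX q m JS)" unfolding dl_def
  proof (rule dim_lower[OF A1])
    show "JJ \<subseteq> JS" unfolding JS_def by blast
    show "JS \<subseteq> {1..q}" by (rule JSq)
    show "card JJ \<le> qs" using sqs unfolding s_def .
    show "\<forall>j\<in>JS. 1 \<le> m j" using L JSq by blast
    show "\<forall>j\<in>JJ. distributed PX lborel (\<lambda>x. x j) (\<lambda>t. ennreal (p j t))" using A2_dens JJq by blast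
    show "\<forall>j\<in>JJ. \<forall>t\<in>{0..1}. 0 < p j t" using A2_bounds A2_c JJq by fastforce
  qed
  have dJS: "dimL2 PX (VJ PX q m JS) \<le> dmax PX q m qs"
  proof -
    have fin: "finite {dimL2 PX (VJ PX q m J) | J. J \<subseteq> {1..q} \<and> card J = qs}"
    proof -
      have "{dimL2 PX (VJ PX q m J) | J. J \<subseteq> {1..q} \<and> card J = qs} =
          (\<lambda>J. dimL2 PX (VJ PX q m J)) ` {J. J \<subseteq> {1..q} \<and> card J = qs}" by blast
      moreover have "finite {J. J \<subseteq> {1..q} \<and> card J = qs}"
        by (rule finite_subset[of _ "Pow {1..q}"]) auto
      ultimately show ?thesis by simp
    qed
    show ?thesis unfolding dmax_def by (rule Max_ge[OF fin]) (use JSq cJS in blast)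
  qed
  define d where "d = dmax PX q m qs"
  have Md: "Mm \<le> 2 * real d" using Mdl dlJS dJS unfolding d_def by linarith
  have d1: "1 \<le> d" using Md Mm1 unfolding d_def by linarith
  define Z where "Z = (\<lambda>x. min ((D x)\<^sup>2) b)"
  have Zm: "Z \<in> borel_measurable PX" unfolding Z_def using Dm by measurable
  have Zb: "\<forall>x\<in>space PX. 0 \<le> Z x \<and> Z x \<le> b" unfolding Z_def using bpos by auto
  have ZD: "AE x in PX. Z x = (D x)\<^sup>2" using Dr rb by eventually_elim (simp add: Z_def)
  have Zr: "AE x in PX. Z x = (r x)\<^sup>2" using Dr ZD by eventually_elim simp
  have EZ: "(\<integral>x. Z x \<partial>PX) \<le> T"
  proof -
    have "(\<integral>x. Z x \<partial>PX) = (\<integral>x. (r x)\<^sup>2 \<partial>PX)"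
      by (rule integral_cong_AE) (use Zm rL2 Zr in \<open>auto simp: L2_def\<close>)
    then show ?thesis using Er by simp
  qed
  define MP where "MP = PiM {..<n} (\<lambda>_. PX)"
  interpret mp: prob_space MP unfolding MP_def by (rule prob_space_PiM) (use PX in auto)
  define Good where "Good = {xs \<in> space MP. 2 * T * real n \<le> (\<Sum>i<n. Z (xs i))}"
  have ch: "measure MP Good \<le> exp (- real n * T * (2 * ln 2 - 1) / b)"
    unfolding Good_def MP_def by (rule chernoff_prod[OF PX(1) Zm Zb bpos EZ])
  have Goodm: "Good \<in> sets MP" unfolding Good_def MP_def using Zm by measurable
  define Bad where "Bad = {xs \<in> space MP.
        \<not> ((1 / real n) * (\<Sum>i<n. ((\<Sum>j\<in>{1..q}. f j (xs i j))
              - (\<Sum>j\<in>JJ. projV PX q j (m j) (\<lambda>x. f j (x j)) (xs i)))\<^sup>2)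
           \<le> 2 * c' * (1 - \<rho>\<^sup>2) * \<kappa>)}"
  have aeall: "AE xs in MP. \<forall>i\<in>{..<n}. Z (xs i) = (D (xs i))\<^sup>2"
  proof (rule AE_finite_allI)
    fix i assume i: "i \<in> {..<n}"
    show "AE xs in MP. Z (xs i) = (D (xs i))\<^sup>2"
      unfolding MP_def by (rule AE_PiM_component[where M="\<lambda>_. PX", OF _ i ZD]) (use PX in auto)
  qed simp
  have BG: "AE xs in MP. xs \<in> Bad \<longrightarrow> xs \<in> Good"
    using aeall
  proof eventually_elim
    case (elim xs)
    show ?case
    proof
      assume xB: "xs \<in> Bad"
      have sp: "xs \<in> space MP" using xB unfolding Bad_def by blast
      have ineq: "\<not> (1 / real n) * (\<Sum>i<n. (D (xs i))\<^sup>2) \<le> 2 * T"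
        using xB unfolding Bad_def D_def T_def by (simp add: mult.assoc)
      have n0: "n \<noteq> 0" using ineq Tpos by (cases "n = 0") auto
      hence "2 * T * real n < (\<Sum>i<n. (D (xs i))\<^sup>2)" using ineq by (simp add: field_simps)
      also have "(\<Sum>i<n. (D (xs i))\<^sup>2) = (\<Sum>i<n. Z (xs i))" using elim by simp
      finally show "xs \<in> Good" unfolding Good_def using sp by simp
    qed
  qed
  have "emeasure MP Bad \<le> emeasure MP Good" by (rule emeasure_mono_AE[OF BG Goodm])
  hence mBG: "measure MP Bad \<le> measure MP Good"
    unfolding measure_def by (rule enn2real_mono) (simp add: mp.emeasure_eq_measure)
  have ln2: "11/16 \<le> ln (2::real)"
    using ln_approx_bounds[of 2 2] by (simp add: eval_nat_numeral)
  have fin: "exp (- real n * T * (2 * ln 2 - 1) / b) \<le> exp (- (3 / 16) * (real n / real d))"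
  proof -
    have "real n * (3/8) / (2 * real d) \<le> real n * (2 * ln 2 - 1) / Mm"
    proof (rule frac_le)
      have "3/8 \<le> 2 * ln 2 - (1::real)" using ln2 by simp
      then show "real n * (3/8) \<le> real n * (2 * ln 2 - 1)" by (rule mult_left_mono) simp
    qed (use ln2 Mm1 Md in auto)
    moreover have "real n * T * (2 * ln 2 - 1) / b = real n * (2 * ln 2 - 1) / Mm"
      unfolding b_def using Tpos by simp
    moreover have "real n * (3/8) / (2 * real d) = (3 / 16) * (real n / real d)" by simp
    ultimately show ?thesis by simp
  qed
  have "measure MP Bad \<le> exp (- (3 / 16) * (real n / real d))" using mBG ch fin by linarith
  then show ?thesis unfolding Bad_def MP_def d_def T_def JJ_def \<rho>_def \<kappa>_def by simp
qed


end
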